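(* Let $X$ be a finite, connected geometric simplicial complex with vertex set $V$, let $q \in [1,\infty)$, and let $f,g: X \to \mathbb{R}$ be functions each obtained from a function on $V$ by extending linearly over the simplices of $X$. Let $p$ be a balanced probability distribution on $V$. Then \[ d^{GW}_q(G_f,G_g) \leq \tfrac{1}{2}\, |V|^{2/q}\, \|f-g\|_{L^q(p)}. \]
   Context: Merge tree: for $f: X\to\mathbb{R}$, declare $x\sim y$ if $f(x)=f(y)=a$ and $x,y$ lie in the same connected component of the sublevel set $f^{-1}(-\infty,a]$; the merge tree is the quotient $T_f = X/\!\sim$, and $f$ descends to a function on $T_f$ (still denoted $f$). Let $\pi_f: V \to T_f$ be the restriction of the quotient map to the vertex set. The least common ancestor (LCA) matrix $W_f \in \mathbb{R}^{V\times V}$ is defined by $W_f(v,w)$ = the maximum value of $f$ along the unique geodesic (simple) path from $\pi_f(v)$ to $\pi_f(w)$ in the tree $T_f$. A probability distribution $p$ on $V$ is balanced if $p(u)p(v)\le p(w)$ for all $u,v,w\in V$. The measure network of $f$ is $G_f=(V,p,W_f)$. Weighted norm: $\|h\|_{L^q(p)} = (\sum_{v\in V}|h(v)|^q p(v))^{1/q}$ for $h:V\to\mathbb{R}$. For finite measure networks $G_1=(V_1,p_1,W_1)$, $G_2=(V_2,p_2,W_2)$ (with $p_i$ probability vectors and $W_i$ real square matrices indexed by $V_i$), let $\mathcal{C}(p_1,p_2)$ be the set of nonnegative matrices $C\in\mathbb{R}_+^{V_1\times V_2}$ with row sums $p_1$ and column sums $p_2$, and \[ d^{GW}_q(G_1,G_2)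 = \tfrac12 \min_{C\in\mathcal{C}(p_1,p_2)} \Big(\sum_{i,k\in V_1}\sum_{j,l\in V_2} |W_1(i,k)-W_2(j,l)|^q C_{i,j}C_{k,l}\Big)^{1/q}. \] *)

theory Defs
  imports "HOL-Analysis.Analysis"
begin

definition geom_simplicial_complex :: "'v set set \<Rightarrow> ('v \<Rightarrow> 'a::euclidean_space) \<Rightarrow> bool" where
  "geom_simplicial_complex K pos \<longleftrightarrow>
     finite K \<and>
     (\<forall>\<sigma>\<in>K. \<sigma> \<noteq> {} \<and> finite \<sigma> \<and> (\<forall>\<tau>. \<tau> \<subseteq> \<sigma> \<and> \<tau> \<noteq> {} \<longrightarrow> \<tau> \<in> K)) \<and>
     (\<forall>\<sigma>\<in>K. inj_on pos \<sigma> \<and> \<not> affine_dependent (pos ` \<sigma>)) \<and>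
     (\<forall>\<sigma>\<in>K. \<forall>\<tau>\<in>K. convex hull (pos ` \<sigma>) \<inter> convex hull (pos ` \<tau>) = convex hull (pos ` (\<sigma> \<inter> \<tau>)))"

definition vertices :: "'v set set \<Rightarrow> 'v set" where
  "vertices K = \<Union>K"

definition realization :: "'v set set \<Rightarrow> ('v \<Rightarrow> 'a::euclidean_space) \<Rightarrow> 'a set" where
  "realization K pos = (\<Union>\<sigma>\<in>K. convex hull (pos ` \<sigma>))"

definition piecewise_linear :: "'v set set \<Rightarrow> ('v \<Rightarrow> 'a::euclidean_space) \<Rightarrow> ('a \<Rightarrow> real) \<Rightarrow> bool" where
  "piecewise_linear K pos f \<longleftrightarrow>
     (\<forall>\<sigma>\<in>K. \<forall>l::'v \<Rightarrow> real. (\<forall>v\<in>\<sigma>. 0 \<le> l v) \<and> sum l \<sigma> = 1 \<longrightarrow>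
        f (\<Sum>v\<in>\<sigma>. l v *\<^sub>R pos v) = (\<Sum>v\<in>\<sigma>. l v * f (pos v)))"

definition merge_rel :: "'a::euclidean_space set \<Rightarrow> ('a \<Rightarrow> real) \<Rightarrow> 'a \<Rightarrow> 'a \<Rightarrow> bool" where
  "merge_rel X f x y \<longleftrightarrow> x \<in> X \<and> y \<in> X \<and> f x = f y \<and>
      connected_component {z \<in> X. f z \<le> f x} x y"

definition merge_class :: "'a::euclidean_space set \<Rightarrow> ('a \<Rightarrow> real) \<Rightarrow> 'a \<Rightarrow> 'a set" where
  "merge_class X f x = {y. merge_rel X f x y}"

definition merge_tree :: "'a::euclidean_space set \<Rightarrow> ('a \<Rightarrow> real) \<Rightarrow> 'a set topology" where
  "merge_tree X f = topology (\<lambda>U. U \<subseteq> merge_class X f ` X \<and>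
      openin (top_of_set X) {x \<in> X. merge_class X f x \<in> U})"

definition merge_fun :: "('a \<Rightarrow> real) \<Rightarrow> 'a set \<Rightarrow> real" where
  "merge_fun f c = f (SOME x. x \<in> c)"

text \<open>LCA matrix: maximum of f along the unique geodesic (simple path, i.e. arc,
or the constant path if the endpoints coincide) in T_f from pi_f(v) to pi_f(w).\<close>
definition lca_matrix :: "'v set set \<Rightarrow> ('v \<Rightarrow> 'a::euclidean_space) \<Rightarrow> ('a \<Rightarrow> real) \<Rightarrow> 'v \<Rightarrow> 'v \<Rightarrow> real" where
  "lca_matrix K pos f v w =
     (let X = realization K pos; T = merge_tree X f;
          a = merge_class X f (pos v); b = merge_class X f (pos w)
      in if a = b then merge_fun f a
         else (SOME m. \<exists>\<gamma>. pathin T \<gamma> \<and> inj_on \<gamma> {0..1} \<and> \<gamma> 0 = a \<and> \<gamma> 1 = b \<and>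
                   m = Sup (merge_fun f ` \<gamma> ` {0..1})))"

definition balanced :: "'v set \<Rightarrow> ('v \<Rightarrow> real) \<Rightarrow> bool" where
  "balanced V p \<longleftrightarrow> (\<forall>u\<in>V. \<forall>v\<in>V. \<forall>w\<in>V. p u * p v \<le> p w)"

definition prob_vector :: "'v set \<Rightarrow> ('v \<Rightarrow> real) \<Rightarrow> bool" where
  "prob_vector V p \<longleftrightarrow> (\<forall>v\<in>V. 0 \<le> p v) \<and> sum p V = 1"

definition Lq_norm :: "real \<Rightarrow> 'v set \<Rightarrow> ('v \<Rightarrow> real) \<Rightarrow> ('v \<Rightarrow> real) \<Rightarrow> real" where
  "Lq_norm q V p h = (\<Sum>v\<in>V. \<bar>h v\<bar> powr q * p v) powr (1 / q)"

definition couplings :: "'v set \<Rightarrow> ('v \<Rightarrow> real) \<Rightarrow> 'w set \<Rightarrow> ('w \<Rightarrow> real) \<Rightarrow> ('v \<Rightarrow> 'w \<Rightarrow> real) set" where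
  "couplings V1 p1 V2 p2 = {C. (\<forall>i\<in>V1. \<forall>j\<in>V2. 0 \<le> C i j) \<and>
       (\<forall>i\<in>V1. (\<Sum>j\<in>V2. C i j) = p1 i) \<and> (\<forall>j\<in>V2. (\<Sum>i\<in>V1. C i j) = p2 j)}"

text \<open>Gromov-Wasserstein q-distance; the minimum is written as an infimum
(the feasible set is compact, so the infimum is attained).\<close>
definition dGW :: "real \<Rightarrow> 'v set \<Rightarrow> ('v \<Rightarrow> real) \<Rightarrow> ('v \<Rightarrow> 'v \<Rightarrow> real)
                   \<Rightarrow> 'w set \<Rightarrow> ('w \<Rightarrow> real) \<Rightarrow> ('w \<Rightarrow> 'w \<Rightarrow> real) \<Rightarrow> real" where
  "dGW q V1 p1 W1 V2 p2 W2 = 1/2 * Inf ((\<lambda>C.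
      (\<Sum>i\<in>V1. \<Sum>k\<in>V1. \<Sum>j\<in>V2. \<Sum>l\<in>V2. \<bar>W1 i k - W2 j l\<bar> powr q * C i j * C k l) powr (1/q))
      ` couplings V1 p1 V2 p2)"

end

theory Submission
  imports Defs
begin


locale PL =
  fixes K :: "'v set set" and pos :: "'v \<Rightarrow> 'a::euclidean_space" and f :: "'a \<Rightarrow> real"
  assumes gsc: "geom_simplicial_complex K pos" and plf: "piecewise_linear K pos f"
begin

definition H where "H \<sigma> = convex hull (pos ` \<sigma>)"

lemma finK: "finite K" using gsc unfolding geom_simplicial_complex_def by blast
lemma Kne: "\<sigma> \<in> K \<Longrightarrow> \<sigma> \<noteq> {}" using gsc unfolding geom_simplicial_complex_def by blast
lemma Kfin: "\<sigma> \<in> K \<Longrightarrow> finite \<sigma>" using gsc unfolding geom_simplicial_complex_def by blast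
lemma Ksub: "\<sigma> \<in> K \<Longrightarrow> \<tau> \<subseteq> \<sigma> \<Longrightarrow> \<tau> \<noteq> {} \<Longrightarrow> \<tau> \<in> K" using gsc unfolding geom_simplicial_complex_def by blast
lemma Kinj: "\<sigma> \<in> K \<Longrightarrow> inj_on pos \<sigma>" using gsc unfolding geom_simplicial_complex_def by blast
lemma Kind: "\<sigma> \<in> K \<Longrightarrow> \<not> affine_dependent (pos ` \<sigma>)" using gsc unfolding geom_simplicial_complex_def by blast
lemma Kint: "\<sigma> \<in> K \<Longrightarrow> \<tau> \<in> K \<Longrightarrow> H \<sigma> \<inter> H \<tau> = H (\<sigma> \<inter> \<tau>)"
  using gsc unfolding geom_simplicial_complex_def H_def by blast

lemma X_eq: "realization K pos = (\<Union>\<sigma>\<in>K. H \<sigma>)" by (simp add: realization_def H_def)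

lemma H_closed: "\<sigma> \<in> K \<Longrightarrow> closed (H \<sigma>)"
  unfolding H_def by (simp add: Kfin compact_imp_closed finite_imp_compact_convex_hull)
lemma H_convex: "convex (H \<sigma>)" unfolding H_def by simp
lemma pos_in_H: "v \<in> \<sigma> \<Longrightarrow> pos v \<in> H \<sigma>" unfolding H_def by (simp add: hull_inc)

lemma vert_K: "v \<in> vertices K \<Longrightarrow> {v} \<in> K"
  unfolding vertices_def using Ksub by blast

lemma pos_in_X: "v \<in> vertices K \<Longrightarrow> pos v \<in> realization K pos"
  using vert_K[of v] pos_in_H[of v "{v}"] X_eq by auto

lemma hull_param:
  assumes "finite \<sigma>" "inj_on pos \<sigma>" "x \<in> H \<sigma>"
  shows "\<exists>l. (\<forall>v\<in>\<sigma>. 0 \<le> l v) \<and> sum l \<sigma> = 1 \<and> x = (\<Sum>v\<in>\<sigma>. l v *\<^sub>R pos v)"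
proof -
  have hx: "x \<in> convex hull (pos ` \<sigma>)" using assms(3) by (simp add: H_def)
  have "\<exists>u. (\<forall>y\<in>pos ` \<sigma>. 0 \<le> u y) \<and> sum u (pos ` \<sigma>) = 1 \<and> (\<Sum>y\<in>pos ` \<sigma>. u y *\<^sub>R y) = x"
    using hx convex_hull_finite[OF finite_imageI[OF assms(1)]] by blast
  then obtain u where u: "\<forall>y\<in>pos ` \<sigma>. 0 \<le> u y" "sum u (pos ` \<sigma>) = 1"
       "(\<Sum>y\<in>pos ` \<sigma>. u y *\<^sub>R y) = x" by blast
  have "sum (u \<circ> pos) \<sigma> = 1" using u(2) assms(2) by (simp add: sum.reindex)
  moreover have "(\<Sum>v\<in>\<sigma>. (u \<circ> pos) v *\<^sub>R pos v) = x"
    using u(3) assms(2) sum.reindex[of pos \<sigma> "\<lambda>y. u y *\<^sub>R y"] by simp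
  moreover have "\<forall>v\<in>\<sigma>. 0 \<le> (u \<circ> pos) v" using u(1) by simp
  ultimately show ?thesis by metis
qed

lemma f_comb:
  assumes "\<sigma> \<in> K" "\<forall>v\<in>\<sigma>. 0 \<le> l v" "sum l \<sigma> = 1"
  shows "f (\<Sum>v\<in>\<sigma>. l v *\<^sub>R pos v) = (\<Sum>v\<in>\<sigma>. l v * f (pos v))"
  using plf assms unfolding piecewise_linear_def by blast

lemma low_vertex:
  assumes "\<sigma> \<in> K" "x \<in> H \<sigma>"
  shows "\<exists>u\<in>\<sigma>. f (pos u) \<le> f x"
proof (rule ccontr)
  assume "\<not> ?thesis"
  hence lt: "\<forall>u\<in>\<sigma>. f x < f (pos u)" by auto
  obtain l where l: "\<forall>v\<in>\<sigma>. 0 \<le> l v" "sum l \<sigma> = 1" "x = (\<Sum>v\<in>\<sigma>. l v *\<^sub>R pos v)"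
    using hull_param[OF Kfin[OF assms(1)] Kinj[OF assms(1)] assms(2)] by blast
  have fx: "f x = (\<Sum>v\<in>\<sigma>. l v * f (pos v))" using f_comb[OF assms(1) l(1,2)] l(3) by simp
  have "(\<Sum>v\<in>\<sigma>. l v * f x) \<le> (\<Sum>v\<in>\<sigma>. l v * f (pos v))"
    using l(1) lt by (intro sum_mono) (auto intro!: mult_left_mono)
  moreover have "(\<Sum>v\<in>\<sigma>. l v * f x) = f x" using l(2) by (simp add: sum_distrib_right[symmetric])
  moreover have "\<exists>v\<in>\<sigma>. 0 < l v"
  proof (rule ccontr)
    assume "\<not> ?thesis" hence "\<forall>v\<in>\<sigma>. l v = 0" using l(1) by force
    thus False using l(2) by simp
  qed
  then obtain v where v: "v \<in> \<sigma>" "0 < l v" by blast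
  have "(\<Sum>v\<in>\<sigma>. l v * f x) < (\<Sum>v\<in>\<sigma>. l v * f (pos v))"
    using l(1) lt v Kfin[OF assms(1)] by (intro sum_strict_mono_ex1) (auto intro!: mult_left_mono mult_strict_left_mono bexI[of _ v])
  ultimately show False using fx by linarith
qed

lemma high_vertex:
  assumes "\<sigma> \<in> K" "x \<in> H \<sigma>"
  shows "\<exists>u\<in>\<sigma>. f x \<le> f (pos u)"
proof (rule ccontr)
  assume "\<not> ?thesis"
  hence lt: "\<forall>u\<in>\<sigma>. f (pos u) < f x" by auto
  obtain l where l: "\<forall>v\<in>\<sigma>. 0 \<le> l v" "sum l \<sigma> = 1" "x = (\<Sum>v\<in>\<sigma>. l v *\<^sub>R pos v)"
    using hull_param[OF Kfin[OF assms(1)] Kinj[OF assms(1)] assms(2)] by blast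
  have fx: "f x = (\<Sum>v\<in>\<sigma>. l v * f (pos v))" using f_comb[OF assms(1) l(1,2)] l(3) by simp
  have "(\<Sum>v\<in>\<sigma>. l v * f (pos v)) \<le> (\<Sum>v\<in>\<sigma>. l v * f x)"
    using l(1) lt by (intro sum_mono) (auto intro!: mult_left_mono)
  moreover have "(\<Sum>v\<in>\<sigma>. l v * f x) = f x" using l(2) by (simp add: sum_distrib_right[symmetric])
  moreover have "\<exists>v\<in>\<sigma>. 0 < l v"
  proof (rule ccontr)
    assume "\<not> ?thesis" hence "\<forall>v\<in>\<sigma>. l v = 0" using l(1) by force
    thus False using l(2) by simp
  qed
  then obtain v where v: "v \<in> \<sigma>" "0 < l v" by blast
  have "(\<Sum>v\<in>\<sigma>. l v * f (pos v)) < (\<Sum>v\<in>\<sigma>. l v * f x)"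
    using l(1) lt v Kfin[OF assms(1)] by (intro sum_strict_mono_ex1) (auto intro!: mult_left_mono mult_strict_left_mono bexI[of _ v])
  ultimately show False using fx by linarith
qed

lemma low_vertex_int:
  assumes "\<sigma> \<in> K" "\<tau> \<in> K" "x \<in> H \<sigma>" "x \<in> H \<tau>"
  shows "\<exists>u\<in>\<sigma> \<inter> \<tau>. f (pos u) \<le> f x"
proof -
  have x: "x \<in> H (\<sigma> \<inter> \<tau>)" using Kint[OF assms(1,2)] assms(3,4) by auto
  hence "\<sigma> \<inter> \<tau> \<noteq> {}" unfolding H_def by auto
  hence "\<sigma> \<inter> \<tau> \<in> K" using Ksub[OF assms(1)] by auto
  thus ?thesis using low_vertex x by blast
qed

lemma affine_ext:
  assumes "\<sigma> \<in> K"
  shows "\<exists>A. continuous_on UNIV A \<and> (\<forall>x\<in>H \<sigma>. f x = A x) \<and>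
           (\<forall>x y t. A ((1 - t) *\<^sub>R x + t *\<^sub>R y) = (1 - t) * A x + t * A y)"
proof -
  obtain v0 where v0: "v0 \<in> \<sigma>" using Kne[OF assms] by auto
  define s0 where "s0 = pos v0"
  define S' where "S' = pos ` \<sigma> - {s0}"
  have ins: "pos ` \<sigma> = insert s0 S'" using v0 by (auto simp: S'_def s0_def)
  have "\<not> dependent ((\<lambda>x. -s0 + x) ` S')"
  proof -
    have "s0 \<notin> S'" by (simp add: S'_def)
    thus ?thesis using Kind[OF assms] affine_dependent_iff_dependent[of s0 S'] ins by metis
  qed
  then obtain L where L: "linear L" "\<forall>b\<in>(\<lambda>x. -s0 + x) ` S'. L b = f (b + s0) - f s0"
    using linear_independent_extend[of "(\<lambda>x. -s0 + x) ` S'" "\<lambda>b. f (b + s0) - f s0"] by blast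
  define A where "A x = f s0 + L (x - s0)" for x
  have Lc: "bounded_linear L" using L(1) linear_conv_bounded_linear by auto
  have cont: "continuous_on UNIV A"
  proof -
    have "continuous_on UNIV L" using linear_continuous_on[OF Lc] .
    hence "continuous_on UNIV (\<lambda>x. L (x - s0))"
      by (rule continuous_on_compose2) (auto intro: continuous_intros)
    thus ?thesis unfolding A_def by (intro continuous_intros)
  qed
  have Av: "A (pos v) = f (pos v)" if "v \<in> \<sigma>" for v
  proof (cases "pos v = s0")
    case True thus ?thesis by (simp add: A_def L(1) linear_0)
  next
    case False
    hence "-s0 + pos v \<in> (\<lambda>x. -s0 + x) ` S'" using that by (auto simp: S'_def)
    hence "L (-s0 + pos v) = f (pos v) - f s0" using L(2) by auto
    thus ?thesis by (simp add: A_def)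
  qed
  have aff: "A ((1 - t) *\<^sub>R x + t *\<^sub>R y) = (1 - t) * A x + t * A y" for x y t
  proof -
    have "(1 - t) *\<^sub>R x + t *\<^sub>R y - s0 = (1 - t) *\<^sub>R (x - s0) + t *\<^sub>R (y - s0)"
      by (simp add: algebra_simps)
    hence "L ((1 - t) *\<^sub>R x + t *\<^sub>R y - s0) = (1 - t) * L (x - s0) + t * L (y - s0)"
      using L(1) by (simp add: linear_add linear_scale)
    thus ?thesis unfolding A_def by (simp add: algebra_simps)
  qed
  have onH: "f x = A x" if xH: "x \<in> H \<sigma>" for x
  proof -
    obtain l where l: "\<forall>v\<in>\<sigma>. 0 \<le> l v" "sum l \<sigma> = 1" "x = (\<Sum>v\<in>\<sigma>. l v *\<^sub>R pos v)"
      using hull_param[OF Kfin[OF assms] Kinj[OF assms] xH] by blast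
    have s0e: "s0 = (\<Sum>v\<in>\<sigma>. l v *\<^sub>R s0)" by (metis l(2) scaleR_one scaleR_sum_left)
    have "x - s0 = (\<Sum>v\<in>\<sigma>. l v *\<^sub>R pos v - l v *\<^sub>R s0)"
      using l(3) s0e sum_subtractf[of "\<lambda>v. l v *\<^sub>R pos v" "\<lambda>v. l v *\<^sub>R s0" \<sigma>] by metis
    also have "\<dots> = (\<Sum>v\<in>\<sigma>. l v *\<^sub>R (pos v - s0))" by (simp add: scaleR_diff_right)
    finally have "x - s0 = (\<Sum>v\<in>\<sigma>. l v *\<^sub>R (pos v - s0))" .
    hence "L (x - s0) = (\<Sum>v\<in>\<sigma>. l v * L (pos v - s0))"
      using L(1) by (simp add: linear_sum linear_scale)
    also have "\<dots> = (\<Sum>v\<in>\<sigma>. l v * (f (pos v) - f s0))"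
    proof (rule sum.cong)
      fix v assume "v \<in> \<sigma>"
      from Av[OF this] have "L (pos v - s0) = f (pos v) - f s0" by (simp add: A_def)
      thus "l v * L (pos v - s0) = l v * (f (pos v) - f s0)" by simp
    qed simp
    also have "\<dots> = (\<Sum>v\<in>\<sigma>. l v * f (pos v)) - (\<Sum>v\<in>\<sigma>. l v * f s0)"
      by (simp add: right_diff_distrib sum_subtractf)
    also have "(\<Sum>v\<in>\<sigma>. l v * f s0) = f s0" using l(2) by (metis mult_1 sum_distrib_right)
    finally have "A x = (\<Sum>v\<in>\<sigma>. l v * f (pos v))" by (simp add: A_def)
    thus ?thesis using f_comb[OF assms l(1,2)] l(3) by simp
  qed
  show ?thesis using cont onH aff by blast
qed

lemma f_cont_H: "\<sigma> \<in> K \<Longrightarrow> continuous_on (H \<sigma>) f"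
  using affine_ext continuous_on_subset continuous_on_cong by (metis subset_UNIV)

lemma f_cont: "continuous_on (realization K pos) f"
  unfolding X_eq by (rule continuous_on_closed_Union) (auto simp: finK H_closed f_cont_H)

lemma f_seg:
  assumes "\<sigma> \<in> K" "x \<in> H \<sigma>" "y \<in> H \<sigma>" "0 \<le> t" "t \<le> 1"
  shows "f ((1 - t) *\<^sub>R x + t *\<^sub>R y) = (1 - t) * f x + t * f y"
proof -
  obtain A where A: "\<forall>x\<in>H \<sigma>. f x = A x" "\<forall>x y t. A ((1 - t) *\<^sub>R x + t *\<^sub>R y) = (1 - t) * A x + t * A y"
    using affine_ext[OF assms(1)] by blast
  have "(1 - t) *\<^sub>R x + t *\<^sub>R y \<in> H \<sigma>"
    using H_convex[of \<sigma>] assms(2-5) unfolding convex_alt by blast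
  hence "f ((1 - t) *\<^sub>R x + t *\<^sub>R y) = A ((1 - t) *\<^sub>R x + t *\<^sub>R y)" using A(1) by blast
  also have "\<dots> = (1 - t) * A x + t * A y" using A(2) by blast
  also have "\<dots> = (1 - t) * f x + t * f y" using A(1) assms(2,3) by simp
  finally show ?thesis .
qed

end


context PL begin

definition Xr where "Xr r = {x \<in> realization K pos. f x \<le> r}"
definition E where "E r = {(u,w). f (pos u) \<le> r \<and> f (pos w) \<le> r \<and> (\<exists>\<sigma>\<in>K. u \<in> \<sigma> \<and> w \<in> \<sigma>)}"

lemma H_sub_X: "\<sigma> \<in> K \<Longrightarrow> H \<sigma> \<subseteq> realization K pos" using X_eq by auto
lemma X_cases: "x \<in> realization K pos \<Longrightarrow> \<exists>\<sigma>\<in>K. x \<in> H \<sigma>" using X_eq by auto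
lemma inK_vert: "\<sigma> \<in> K \<Longrightarrow> u \<in> \<sigma> \<Longrightarrow> u \<in> vertices K" by (auto simp: vertices_def)

lemma seg_cc:
  assumes "\<sigma> \<in> K" "x \<in> H \<sigma>" "y \<in> H \<sigma>" "f x \<le> r" "f y \<le> r"
  shows "connected_component (Xr r) x y"
proof (rule connected_componentI[of "closed_segment x y"])
  show "closed_segment x y \<subseteq> Xr r"
  proof
    fix z assume "z \<in> closed_segment x y"
    then obtain t where t: "0 \<le> t" "t \<le> 1" "z = (1 - t) *\<^sub>R x + t *\<^sub>R y"
      unfolding closed_segment_def by blast
    have zH: "z \<in> H \<sigma>" using closed_segment_subset[OF assms(2,3) H_convex] \<open>z \<in> closed_segment x y\<close> by blast
    have "f z = (1 - t) * f x + t * f y" using f_seg[OF assms(1-3) t(1,2)] t(3) by simp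
    also have "\<dots> \<le> (1 - t) * r + t * r"
      using t assms(4,5) by (intro add_mono mult_left_mono) auto
    finally have "f z \<le> r" by (simp add: algebra_simps)
    thus "z \<in> Xr r" using zH H_sub_X[OF assms(1)] by (auto simp: Xr_def)
  qed
qed auto

lemma E_step_cc:
  assumes "(u, w) \<in> E r"
  shows "connected_component (Xr r) (pos u) (pos w)"
proof -
  obtain \<sigma> where "\<sigma> \<in> K" "u \<in> \<sigma>" "w \<in> \<sigma>" "f (pos u) \<le> r" "f (pos w) \<le> r"
    using assms by (auto simp: E_def)
  thus ?thesis using seg_cc pos_in_H by blast
qed

lemma pos_in_Xr: "u \<in> vertices K \<Longrightarrow> f (pos u) \<le> r \<Longrightarrow> pos u \<in> Xr r"
  using pos_in_X by (auto simp: Xr_def)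

lemma rtr_cc:
  assumes "(u, w) \<in> (E r)\<^sup>*" "u \<in> vertices K" "f (pos u) \<le> r"
  shows "connected_component (Xr r) (pos u) (pos w)"
  using assms(1)
proof (induction rule: rtrancl_induct)
  case base thus ?case using pos_in_Xr[OF assms(2,3)] by simp
next
  case (step y z) thus ?case using E_step_cc connected_component_trans by blast
qed

definition reach where "reach r u = {w. (u, w) \<in> (E r)\<^sup>*}"
definition G where "G r u = {\<sigma>\<in>K. \<sigma> \<inter> reach r u \<noteq> {}}"
definition Y1 where "Y1 r u = (\<Union>\<sigma>\<in>G r u. H \<sigma> \<inter> Xr r)"
definition Y2 where "Y2 r u = (\<Union>\<sigma>\<in>K - G r u. H \<sigma> \<inter> Xr r)"

lemma reach_le: "w \<in> reach r u \<Longrightarrow> f (pos u) \<le> r \<Longrightarrow> f (pos w) \<le> r"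
  unfolding reach_def
proof -
  assume "w \<in> {w. (u, w) \<in> (E r)\<^sup>*}" "f (pos u) \<le> r"
  hence "(u, w) \<in> (E r)\<^sup>*" by simp
  thus ?thesis using \<open>f (pos u) \<le> r\<close> by (induction rule: rtrancl_induct) (auto simp: E_def)
qed

lemma HXr_closed: "\<sigma> \<in> K \<Longrightarrow> closed (H \<sigma> \<inter> Xr r)"
proof -
  assume s: "\<sigma> \<in> K"
  have "H \<sigma> \<inter> Xr r = {x \<in> H \<sigma>. f x \<le> r}" using H_sub_X[OF s] by (auto simp: Xr_def)
  moreover have "closed {x \<in> H \<sigma>. f x \<le> r}"
    by (rule continuous_on_closed_Collect_le) (auto simp: f_cont_H[OF s] H_closed[OF s] continuous_on_const)
  ultimately show ?thesis by simp
qed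

lemma Y_closed: "closed (Y1 r u)" "closed (Y2 r u)"
proof -
  have "\<forall>\<sigma>\<in>G r u. closed (H \<sigma> \<inter> Xr r)" using HXr_closed by (simp add: G_def)
  thus "closed (Y1 r u)" unfolding Y1_def by (intro closed_UN) (simp_all add: G_def finK)
  have "\<forall>\<sigma>\<in>K - G r u. closed (H \<sigma> \<inter> Xr r)" using HXr_closed by simp
  thus "closed (Y2 r u)" unfolding Y2_def by (intro closed_UN) (simp_all add: finK)
qed

lemma Y_cover: "Xr r \<subseteq> Y1 r u \<union> Y2 r u"
  unfolding Y1_def Y2_def using X_cases by (fastforce simp: Xr_def)

lemma Y_disj:
  assumes "f (pos u) \<le> r"
  shows "Y1 r u \<inter> Y2 r u = {}"
proof (rule ccontr)
  assume "Y1 r u \<inter> Y2 r u \<noteq> {}"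
  then obtain z \<sigma>1 \<sigma>2 where z: "\<sigma>1 \<in> G r u" "\<sigma>2 \<in> K" "\<sigma>2 \<notin> G r u" "z \<in> H \<sigma>1" "z \<in> H \<sigma>2" "z \<in> Xr r"
    unfolding Y1_def Y2_def by blast
  obtain w1 where w1: "w1 \<in> \<sigma>1" "w1 \<in> reach r u" and s1: "\<sigma>1 \<in> K" using z(1) by (auto simp: G_def)
  obtain w where w: "w \<in> \<sigma>1 \<inter> \<sigma>2" "f (pos w) \<le> f z" using low_vertex_int[OF s1 z(2) z(4,5)] by blast
  have "f z \<le> r" using z(6) by (simp add: Xr_def)
  hence "(w1, w) \<in> E r" using w w1 reach_le[OF w1(2) assms] s1 by (auto simp: E_def)
  hence "w \<in> reach r u" using w1(2) by (auto simp: reach_def)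
  thus False using z(2,3) w by (auto simp: G_def)
qed

lemma CC:
  assumes "\<sigma> \<in> K" "\<tau> \<in> K" "x \<in> H \<sigma>" "y \<in> H \<tau>" "u \<in> \<sigma>" "w \<in> \<tau>"
    "f (pos u) \<le> r" "f (pos w) \<le> r" "f x \<le> r" "f y \<le> r"
  shows "connected_component (Xr r) x y \<longleftrightarrow> (u, w) \<in> (E r)\<^sup>*"
proof
  assume "(u, w) \<in> (E r)\<^sup>*"
  hence "connected_component (Xr r) (pos u) (pos w)" using rtr_cc inK_vert assms by blast
  moreover have "connected_component (Xr r) x (pos u)" using seg_cc assms pos_in_H by blast
  moreover have "connected_component (Xr r) (pos w) y" using seg_cc assms pos_in_H by blast
  ultimately show "connected_component (Xr r) x y" using connected_component_trans by blast
next
  assume cc: "connected_component (Xr r) x y"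
  let ?C = "connected_component_set (Xr r) x"
  have xY: "x \<in> Y1 r u" using assms(1,3,5,9) H_sub_X[OF assms(1)]
    by (auto simp: Y1_def G_def reach_def Xr_def)
  have "?C \<subseteq> Y1 r u"
  proof (rule ccontr)
    assume nsub: "\<not> ?C \<subseteq> Y1 r u"
    have "connected ?C" by simp
    moreover have "?C \<subseteq> Y1 r u \<union> Y2 r u" using Y_cover connected_component_subset by blast
    moreover have "Y1 r u \<inter> Y2 r u \<inter> ?C = {}" using Y_disj[OF assms(7)] by blast
    moreover have "Y1 r u \<inter> ?C \<noteq> {}" using xY cc connected_component_in connected_component_refl by blast
    moreover have "Y2 r u \<inter> ?C \<noteq> {}" using nsub calculation(2) by blast
    ultimately show False using Y_closed connected_closed by blast
  qed
  hence "y \<in> Y1 r u" using cc by blast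
  then obtain \<sigma>2 w2 where s2: "\<sigma>2 \<in> K" "w2 \<in> \<sigma>2" "w2 \<in> reach r u" "y \<in> H \<sigma>2"
    by (auto simp: Y1_def G_def)
  obtain w' where w': "w' \<in> \<sigma>2 \<inter> \<tau>" "f (pos w') \<le> f y" using low_vertex_int[OF s2(1) assms(2) s2(4) assms(4)] by blast
  have "(w2, w') \<in> E r" using s2 w' reach_le[OF s2(3) assms(7)] assms(10) by (auto simp: E_def)
  moreover have "(w', w) \<in> E r" using w' assms(2,6,8,10) by (auto simp: E_def)
  ultimately show "(u, w) \<in> (E r)\<^sup>*" using s2(3) by (auto simp: reach_def)
qed

end


context PL begin

definition S where "S r u = {z \<in> Xr r. connected_component (Xr r) (pos u) z}"

lemma S_eq_Y1:
  assumes "u \<in> vertices K" "f (pos u) \<le> r"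
  shows "S r u = Y1 r u"
proof
  show "S r u \<subseteq> Y1 r u"
  proof
    fix z assume z: "z \<in> S r u"
    hence zX: "z \<in> Xr r" by (simp add: S_def)
    then obtain \<sigma> where s: "\<sigma> \<in> K" "z \<in> H \<sigma>" using X_cases by (auto simp: Xr_def)
    obtain w where w: "w \<in> \<sigma>" "f (pos w) \<le> f z" using low_vertex[OF s] by blast
    have fz: "f z \<le> r" using zX by (simp add: Xr_def)
    have "(u, w) \<in> (E r)\<^sup>*"
      using CC[OF vert_K[OF assms(1)] s(1) pos_in_H[of u "{u}"] s(2) _ w(1)] assms(2) w(2) fz z
      by (auto simp: S_def)
    thus "z \<in> Y1 r u" using s w zX by (auto simp: Y1_def G_def reach_def)
  qed
next
  show "Y1 r u \<subseteq> S r u"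
  proof
    fix z assume "z \<in> Y1 r u"
    then obtain \<sigma> w where s: "\<sigma> \<in> K" "z \<in> H \<sigma>" "z \<in> Xr r" "w \<in> \<sigma>" "w \<in> reach r u"
      by (auto simp: Y1_def G_def)
    have fz: "f z \<le> r" using s(3) by (simp add: Xr_def)
    have "(u, w) \<in> (E r)\<^sup>*" using s(5) by (simp add: reach_def)
    hence "connected_component (Xr r) (pos u) z"
      using CC[OF vert_K[OF assms(1)] s(1) pos_in_H[of u "{u}"] s(2) _ s(4)] assms(2) fz
        reach_le[OF s(5) assms(2)] by auto
    thus "z \<in> S r u" using s(3) by (simp add: S_def)
  qed
qed

lemma S_compl:
  assumes "u \<in> vertices K" "f (pos u) \<le> r"
  shows "Xr r - S r u = Y2 r u"
  using S_eq_Y1[OF assms] Y_cover[of r u] Y_disj[OF assms(2)]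
  by (auto simp: Y2_def)

lemma S_closed:
  assumes "u \<in> vertices K" "f (pos u) \<le> r"
  shows "closed (S r u)" "closed (Xr r - S r u)"
  using S_eq_Y1[OF assms] S_compl[OF assms] Y_closed by auto

lemma E_vert: "(a, b) \<in> E r \<Longrightarrow> a \<in> vertices K \<and> b \<in> vertices K"
  by (auto simp: E_def inK_vert)

lemma stab:
  assumes "r1 \<le> r2" "\<forall>w\<in>vertices K. f (pos w) \<le> r2 \<longrightarrow> f (pos w) \<le> r1"
    "u \<in> vertices K" "f (pos u) \<le> r1" "x \<in> Xr r1" "connected_component (Xr r2) (pos u) x"
  shows "connected_component (Xr r1) (pos u) x"
proof -
  have EE: "E r2 = E r1" using assms(1,2) by (auto simp: E_def intro: inK_vert)
  obtain \<sigma> where s: "\<sigma> \<in> K" "x \<in> H \<sigma>" using assms(5) X_cases by (auto simp: Xr_def)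
  obtain w where w: "w \<in> \<sigma>" "f (pos w) \<le> f x" using low_vertex[OF s] by blast
  have fx: "f x \<le> r1" using assms(5) by (simp add: Xr_def)
  have "(u, w) \<in> (E r2)\<^sup>*"
    using CC[where r=r2, OF vert_K[OF assms(3)] s(1) pos_in_H[of u "{u}"] s(2) _ w(1)] assms w fx by auto
  hence "(u, w) \<in> (E r1)\<^sup>*" using EE by simp
  thus ?thesis
    using CC[where r=r1, OF vert_K[OF assms(3)] s(1) pos_in_H[of u "{u}"] s(2) _ w(1)] assms w fx by auto
qed

lemma Xr_mono: "r1 \<le> r2 \<Longrightarrow> Xr r1 \<subseteq> Xr r2" by (auto simp: Xr_def)

lemma cc_mono: "r1 \<le> r2 \<Longrightarrow> connected_component (Xr r1) x y \<Longrightarrow> connected_component (Xr r2) x y"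
  using Xr_mono connected_component_of_subset by blast

lemma cc_in: "connected_component (Xr r) x y \<Longrightarrow> x \<in> realization K pos \<and> f x \<le> r \<and> y \<in> realization K pos \<and> f y \<le> r"
  using connected_component_in by (fastforce simp: Xr_def)

abbreviation X where "X \<equiv> realization K pos"
abbreviation \<pi> where "\<pi> \<equiv> merge_class X f"
abbreviation T where "T \<equiv> merge_tree X f"

lemma mr_iff: "merge_rel X f x y \<longleftrightarrow> x \<in> X \<and> y \<in> X \<and> f x = f y \<and> connected_component (Xr (f x)) x y"
  by (simp add: merge_rel_def Xr_def)

lemma mr_refl: "x \<in> X \<Longrightarrow> merge_rel X f x x"
  by (auto simp: mr_iff Xr_def)

lemma in_class: "x \<in> X \<Longrightarrow> x \<in> \<pi> x" by (simp add: merge_class_def mr_refl)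

lemma mr_sym: "merge_rel X f x y \<Longrightarrow> merge_rel X f y x"
  by (auto simp: mr_iff intro: connected_component_sym)

lemma mr_trans: "merge_rel X f x y \<Longrightarrow> merge_rel X f y z \<Longrightarrow> merge_rel X f x z"
  by (auto simp: mr_iff intro: connected_component_trans)

lemma class_eq: "x \<in> X \<Longrightarrow> y \<in> X \<Longrightarrow> \<pi> x = \<pi> y \<longleftrightarrow> merge_rel X f x y"
proof
  assume "x \<in> X" "y \<in> X" "\<pi> x = \<pi> y"
  thus "merge_rel X f x y" using in_class[of y] by (auto simp: merge_class_def)
next
  assume "merge_rel X f x y"
  thus "\<pi> x = \<pi> y" unfolding merge_class_def using mr_sym mr_trans by blast
qed

lemma class_mem: "z \<in> \<pi> x \<Longrightarrow> z \<in> X \<and> \<pi> z = \<pi> x \<and> f z = f x"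
proof -
  assume "z \<in> \<pi> x"
  hence m: "merge_rel X f x z" by (simp add: merge_class_def)
  hence "z \<in> X" "x \<in> X" "f z = f x" by (auto simp: mr_iff)
  thus ?thesis using class_eq m mr_sym by metis
qed

lemma merge_fun_eq: "x \<in> X \<Longrightarrow> merge_fun f (\<pi> x) = f x"
  unfolding merge_fun_def using in_class class_mem by (metis someI)

lemma istop: "istopology (\<lambda>U. U \<subseteq> \<pi> ` X \<and> openin (top_of_set X) {x \<in> X. \<pi> x \<in> U})"
proof -
  have A: "S \<inter> T \<subseteq> \<pi> ` X \<and> openin (top_of_set X) {x \<in> X. \<pi> x \<in> S \<inter> T}"
    if a: "S \<subseteq> \<pi> ` X \<and> openin (top_of_set X) {x \<in> X. \<pi> x \<in> S}"
          "T \<subseteq> \<pi> ` X \<and> openin (top_of_set X) {x \<in> X. \<pi> x \<in> T}" for S T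
  proof -
    have eq: "{x \<in> X. \<pi> x \<in> S \<inter> T} = {x \<in> X. \<pi> x \<in> S} \<inter> {x \<in> X. \<pi> x \<in> T}" by blast
    have "openin (top_of_set X) ({x \<in> X. \<pi> x \<in> S} \<inter> {x \<in> X. \<pi> x \<in> T})"
      using a by (intro openin_Int) blast+
    moreover have "S \<inter> T \<subseteq> \<pi> ` X" using a by blast
    ultimately show ?thesis unfolding eq by blast
  qed
  have B: "\<Union> K' \<subseteq> \<pi> ` X \<and> openin (top_of_set X) {x \<in> X. \<pi> x \<in> \<Union> K'}"
    if a: "\<forall>S\<in>K'. S \<subseteq> \<pi> ` X \<and> openin (top_of_set X) {x \<in> X. \<pi> x \<in> S}" for K'
  proof -
    have eq: "{x \<in> X. \<pi> x \<in> \<Union> K'} = \<Union> ((\<lambda>S. {x \<in> X. \<pi> x \<in> S}) ` K')" by blast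
    have "openin (top_of_set X) (\<Union> ((\<lambda>S. {x \<in> X. \<pi> x \<in> S}) ` K'))"
      using a by (intro openin_Union) blast
    moreover have "\<Union> K' \<subseteq> \<pi> ` X" using a by blast
    ultimately show ?thesis unfolding eq by blast
  qed
  show ?thesis unfolding istopology_def
    by (intro conjI allI impI) (use A B in blast)+
qed

lemma openin_T: "openin T U \<longleftrightarrow> U \<subseteq> \<pi> ` X \<and> openin (top_of_set X) {x \<in> X. \<pi> x \<in> U}"
  unfolding merge_tree_def using topology_inverse'[OF istop] by simp

lemma topspace_T: "topspace T = \<pi> ` X"
proof -
  have "{x \<in> X. \<pi> x \<in> \<pi> ` X} = X" by auto
  hence "openin T (\<pi> ` X)" unfolding openin_T by auto
  hence "\<pi> ` X \<subseteq> topspace T" by (rule openin_subset)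
  moreover have "topspace T \<subseteq> \<pi> ` X" using openin_T[of "topspace T"] by auto
  ultimately show ?thesis by blast
qed

lemma closedin_T:
  assumes "A \<subseteq> \<pi> ` X" "closedin (top_of_set X) {x \<in> X. \<pi> x \<in> A}"
  shows "closedin T A"
proof -
  have "{x \<in> X. \<pi> x \<in> \<pi> ` X - A} = X - {x \<in> X. \<pi> x \<in> A}" by auto
  hence "openin T (\<pi> ` X - A)" using assms(2) unfolding openin_T
    by (auto simp: openin_diff closedin_def)
  thus ?thesis using assms(1) by (simp add: closedin_def topspace_T)
qed

lemma cont_pi: "continuous_map (top_of_set X) T \<pi>"
  unfolding continuous_map_def topspace_T
  by (auto simp: openin_T)

lemma cont_T:
  assumes "continuous_on X h" "\<And>x y. x \<in> X \<Longrightarrow> y \<in> X \<Longrightarrow> \<pi> x = \<pi> y \<Longrightarrow> h x = h y"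
  shows "continuous_map T euclidean (\<lambda>c. h (SOME x. x \<in> c))"
  unfolding continuous_map_def
proof (intro conjI allI impI)
  show "(\<lambda>c. h (SOME x. x \<in> c)) \<in> topspace T \<rightarrow> topspace euclidean" by simp
  fix U :: "'b set" assume U: "openin euclidean U"
  have eq: "h (SOME z. z \<in> \<pi> x) = h x" if "x \<in> X" for x
  proof -
    have "(SOME z. z \<in> \<pi> x) \<in> \<pi> x" using in_class[OF that] by (rule someI)
    thus ?thesis using class_mem assms(2) that by metis
  qed
  have e1: "{x \<in> X. \<pi> x \<in> {c \<in> topspace T. h (SOME x. x \<in> c) \<in> U}} = {x \<in> X. h x \<in> U}"
  proof (intro set_eqI iffI)
    fix x assume "x \<in> {x \<in> X. \<pi> x \<in> {c \<in> topspace T. h (SOME x. x \<in> c) \<in> U}}"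
    hence x: "x \<in> X" and hs: "h (SOME z. z \<in> \<pi> x) \<in> U" by auto
    have "h x \<in> U" using eq[OF x] hs by simp
    thus "x \<in> {x \<in> X. h x \<in> U}" using x by simp
  next
    fix x assume x: "x \<in> {x \<in> X. h x \<in> U}"
    hence "\<pi> x \<in> topspace T" by (simp add: topspace_T)
    thus "x \<in> {x \<in> X. \<pi> x \<in> {c \<in> topspace T. h (SOME x. x \<in> c) \<in> U}}" using eq x by simp
  qed
  have cm: "continuous_map (top_of_set X) euclidean h" using assms(1) by simp
  have "openin (top_of_set X) {x \<in> topspace (top_of_set X). h x \<in> U}"
    using openin_continuous_map_preimage[OF cm U] .
  hence o2: "openin (top_of_set X) {x \<in> X. h x \<in> U}" by simp
  have sub: "{c \<in> topspace T. h (SOME x. x \<in> c) \<in> U} \<subseteq> \<pi> ` X" by (auto simp: topspace_T)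
  show "openin T {c \<in> topspace T. h (SOME x. x \<in> c) \<in> U}"
    unfolding openin_T using sub o2 e1 by simp
qed

lemma mf_cont: "continuous_map T euclidean (merge_fun f)"
proof -
  have "continuous_map T euclidean (\<lambda>c. f (SOME x. x \<in> c))"
    by (rule cont_T) (auto simp: f_cont class_eq mr_iff)
  thus ?thesis by (simp add: merge_fun_def[abs_def])
qed

lemma U_lemma:
  assumes "connectedin T \<Gamma>" "\<Gamma> \<subseteq> \<pi> ` Xr r" "u \<in> vertices K" "f (pos u) \<le> r"
    "\<pi> (pos u) \<in> \<Gamma>" "c \<in> \<Gamma>"
  shows "\<exists>x. c = \<pi> x \<and> x \<in> Xr r \<and> connected_component (Xr r) (pos u) x"
proof -
  define A1 where "A1 = \<pi> ` S r u"
  define A2 where "A2 = \<pi> ` (Xr r - S r u)"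
  have XrX: "Xr r \<subseteq> X" by (auto simp: Xr_def)
  have sat: "x \<in> S r u" if "x \<in> X" "z \<in> S r u" "\<pi> x = \<pi> z" for x z
  proof -
    have zX: "z \<in> X" using that(2) XrX by (auto simp: S_def)
    have m: "merge_rel X f z x" using class_eq[OF zX that(1)] that(3) by simp
    have fz: "f z \<le> r" using that(2) by (simp add: S_def Xr_def)
    have "connected_component (Xr r) z x" using m fz cc_mono by (auto simp: mr_iff)
    moreover have "connected_component (Xr r) (pos u) z" using that(2) by (simp add: S_def)
    ultimately have "connected_component (Xr r) (pos u) x" using connected_component_trans by blast
    thus ?thesis using m fz by (auto simp: S_def mr_iff Xr_def)
  qed
  have pre1: "{x \<in> X. \<pi> x \<in> A1} = S r u" using sat XrX by (auto simp: A1_def S_def)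
  have pre2: "{x \<in> X. \<pi> x \<in> A2} = Xr r - S r u"
  proof
    show "{x \<in> X. \<pi> x \<in> A2} \<subseteq> Xr r - S r u"
    proof
      fix x assume "x \<in> {x \<in> X. \<pi> x \<in> A2}"
      then obtain z where z: "x \<in> X" "z \<in> Xr r" "z \<notin> S r u" "\<pi> x = \<pi> z" by (auto simp: A2_def)
      have zX: "z \<in> X" using z(2) XrX by auto
      have "f x = f z" using class_eq[OF z(1) zX] z(4) by (simp add: mr_iff)
      hence "x \<in> Xr r" using z(1,2) by (simp add: Xr_def)
      moreover have "x \<notin> S r u" using sat[OF zX _ z(4)[symmetric]] z(3) by blast
      ultimately show "x \<in> Xr r - S r u" by blast
    qed
  next
    show "Xr r - S r u \<subseteq> {x \<in> X. \<pi> x \<in> A2}" using XrX by (auto simp: A2_def)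
  qed
  have SX: "S r u \<subseteq> X" using XrX by (auto simp: S_def)
  have cl1: "closedin T A1"
  proof (rule closedin_T)
    show "A1 \<subseteq> \<pi> ` X" using SX by (auto simp: A1_def)
    show "closedin (top_of_set X) {x \<in> X. \<pi> x \<in> A1}"
      unfolding pre1 using closed_subset[OF SX S_closed(1)[OF assms(3,4)]] .
  qed
  have cl2: "closedin T A2"
  proof (rule closedin_T)
    show "A2 \<subseteq> \<pi> ` X" using XrX by (auto simp: A2_def)
    have "Xr r - S r u \<subseteq> X" using XrX by auto
    thus "closedin (top_of_set X) {x \<in> X. \<pi> x \<in> A2}"
      unfolding pre2 using closed_subset S_closed(2)[OF assms(3,4)] by blast
  qed
  have disj: "A1 \<inter> A2 = {}"
  proof (rule ccontr)
    assume "A1 \<inter> A2 \<noteq> {}"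
    then obtain z1 z2 where "z1 \<in> S r u" "z2 \<in> Xr r" "z2 \<notin> S r u" "\<pi> z1 = \<pi> z2"
      by (auto simp: A1_def A2_def)
    thus False using sat XrX by blast
  qed
  have cov: "\<Gamma> \<subseteq> A1 \<union> A2" using assms(2) by (auto simp: A1_def A2_def)
  have "pos u \<in> S r u" using pos_in_Xr[OF assms(3,4)] by (simp add: S_def)
  hence ne: "A1 \<inter> \<Gamma> \<noteq> {}" using assms(5) by (auto simp: A1_def)
  have "A2 \<inter> \<Gamma> = {}"
    using assms(1) cl1 cl2 cov disj ne unfolding connectedin_closedin by blast
  hence "c \<in> A1" using cov assms(6) by blast
  thus ?thesis by (auto simp: A1_def S_def)
qed

end


context PL begin

lemma g_cont: "pathin T \<gamma> \<Longrightarrow> continuous_on {0..1} (\<lambda>t. merge_fun f (\<gamma> t))"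
proof -
  assume p: "pathin T \<gamma>"
  have "continuous_map (subtopology euclideanreal {0..1}) euclidean (merge_fun f \<circ> \<gamma>)"
    using continuous_map_compose[OF p[unfolded pathin_def] mf_cont] .
  thus ?thesis by (simp add: o_def)
qed

lemma g_in: "pathin T \<gamma> \<Longrightarrow> t \<in> {0..1} \<Longrightarrow> \<exists>x\<in>X. \<gamma> t = \<pi> x"
proof -
  assume p: "pathin T \<gamma>" "t \<in> {0..1}"
  hence "\<gamma> t \<in> topspace T" unfolding pathin_def continuous_map_def by auto
  thus ?thesis by (auto simp: topspace_T)
qed

lemma sub_conn: "pathin T \<gamma> \<Longrightarrow> {a..b} \<subseteq> {0..1} \<Longrightarrow> connectedin T (\<gamma> ` {a..b})"
proof -
  assume p: "pathin T \<gamma>" "{a..b} \<subseteq> {0..(1::real)}"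
  have "connectedin (subtopology euclideanreal {0..1}) {a..b}"
    using p(2) by (simp add: connectedin_subtopology)
  thus ?thesis using connectedin_continuous_map_image p(1) unfolding pathin_def by blast
qed

lemma g_val: "pathin T \<gamma> \<Longrightarrow> t \<in> {0..1} \<Longrightarrow> \<gamma> t = \<pi> x \<Longrightarrow> x \<in> X \<Longrightarrow> merge_fun f (\<gamma> t) = f x"
  using merge_fun_eq by simp

lemma image_sub_Xr:
  assumes "pathin T \<gamma>" "{a..b} \<subseteq> {0..1}" "\<forall>t\<in>{a..b}. merge_fun f (\<gamma> t) \<le> r"
  shows "\<gamma> ` {a..b} \<subseteq> \<pi> ` Xr r"
proof
  fix c assume "c \<in> \<gamma> ` {a..b}"
  then obtain t where t: "t \<in> {a..b}" "c = \<gamma> t" by blast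
  obtain x where x: "x \<in> X" "\<gamma> t = \<pi> x" using g_in[OF assms(1)] t assms(2) by blast
  have "merge_fun f (\<gamma> t) \<le> r" using assms(3) t(1) by blast
  hence "f x \<le> r" using merge_fun_eq[OF x(1)] x(2) by simp
  thus "c \<in> \<pi> ` Xr r" using x t by (auto simp: Xr_def)
qed

lemma side_lemma:
  assumes p: "pathin T \<gamma>" and ab: "{a..b} \<subseteq> {0..1}" and t0: "t0 \<in> {a..b}"
    and g0: "\<gamma> t0 = \<pi> (pos w)" and w: "w \<in> vertices K" and s: "s \<in> {a..b}"
    and le: "\<forall>t\<in>{a..b}. merge_fun f (\<gamma> t) \<le> u1" and wu: "f (pos w) \<le> u" and uu: "u \<le> u1"
    and st: "\<forall>w'\<in>vertices K. f (pos w') \<le> u1 \<longrightarrow> f (pos w') \<le> u"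
    and gs: "merge_fun f (\<gamma> s) = u"
  shows "\<exists>x. \<gamma> s = \<pi> x \<and> f x = u \<and> connected_component (Xr u) (pos w) x"
proof -
  have "\<exists>x. \<gamma> s = \<pi> x \<and> x \<in> Xr u1 \<and> connected_component (Xr u1) (pos w) x"
  proof (rule U_lemma)
    show "connectedin T (\<gamma> ` {a..b})" using sub_conn[OF p ab] .
    show "\<gamma> ` {a..b} \<subseteq> \<pi> ` Xr u1" using image_sub_Xr[OF p ab le] .
    show "w \<in> vertices K" using w .
    show "f (pos w) \<le> u1" using wu uu by simp
    show "\<pi> (pos w) \<in> \<gamma> ` {a..b}" using g0 t0 by force
    show "\<gamma> s \<in> \<gamma> ` {a..b}" using s by blast
  qed
  then obtain x where x: "\<gamma> s = \<pi> x" "x \<in> Xr u1" "connected_component (Xr u1) (pos w) x" by blast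
  have xX: "x \<in> X" using x(2) by (simp add: Xr_def)
  have fx: "f x = u" using gs merge_fun_eq[OF xX] x(1) by simp
  have "x \<in> Xr u" using xX fx by (simp add: Xr_def)
  hence "connected_component (Xr u) (pos w) x" using stab[OF uu st w wu _ x(3)] by blast
  thus ?thesis using x(1) fx by blast
qed

lemma fin_vert: "finite (vertices K)"
  unfolding vertices_def using finK Kfin by blast

lemma arc_le:
  assumes p: "pathin T \<gamma>" and i: "i \<in> vertices K" and k: "k \<in> vertices K"
    and g0: "\<gamma> 0 = \<pi> (pos i)" and g1: "\<gamma> 1 = \<pi> (pos k)"
    and le: "\<forall>t\<in>{0..1}. merge_fun f (\<gamma> t) \<le> r"
  shows "connected_component (Xr r) (pos i) (pos k)"
proof -
  have "merge_fun f (\<gamma> 0) \<le> r" using le by simp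
  hence fi: "f (pos i) \<le> r" using g0 merge_fun_eq[OF pos_in_X[OF i]] by simp
  have "\<exists>x. \<gamma> 1 = \<pi> x \<and> x \<in> Xr r \<and> connected_component (Xr r) (pos i) x"
  proof (rule U_lemma)
    show "connectedin T (\<gamma> ` {0..1})" using sub_conn[OF p] by simp
    show "\<gamma> ` {0..1} \<subseteq> \<pi> ` Xr r" using image_sub_Xr[OF p _ le] by simp
    show "\<pi> (pos i) \<in> \<gamma> ` {0..1}" using g0 by force
    show "\<gamma> 1 \<in> \<gamma> ` {0..1}" by force
  qed (use i fi in auto)
  then obtain x where x: "\<pi> (pos k) = \<pi> x" "x \<in> Xr r" "connected_component (Xr r) (pos i) x"
    using g1 by auto
  have xX: "x \<in> X" using x(2) by (simp add: Xr_def)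
  have m: "merge_rel X f (pos k) x" using class_eq[OF pos_in_X[OF k] xX] x(1) by simp
  hence "f x = f (pos k)" "connected_component (Xr (f (pos k))) (pos k) x" by (auto simp: mr_iff)
  hence "connected_component (Xr r) (pos k) x" using x(2) cc_mono by (auto simp: Xr_def)
  thus ?thesis using x(3) connected_component_sym connected_component_trans by blast
qed

lemma arc_ge:
  assumes p: "pathin T \<gamma>" and inj: "inj_on \<gamma> {0..1}" and i: "i \<in> vertices K" and k: "k \<in> vertices K"
    and g0: "\<gamma> 0 = \<pi> (pos i)" and g1: "\<gamma> 1 = \<pi> (pos k)"
    and cc: "connected_component (Xr r) (pos i) (pos k)"
  shows "\<forall>t\<in>{0..1}. merge_fun f (\<gamma> t) \<le> r"
proof (rule ccontr)
  assume neg: "\<not> ?thesis"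
  define g where "g t = merge_fun f (\<gamma> t)" for t
  have gc: "continuous_on {0..1} g" using g_cont[OF p] by (simp add: g_def[abs_def])
  obtain ts where ts: "ts \<in> {0..1}" "\<forall>t\<in>{0..1}. g t \<le> g ts"
    using continuous_attains_sup[OF compact_Icc _ gc] by auto
  define v where "v = g ts"
  have vr: "r < v" using neg ts by (force simp: v_def g_def)
  have fi: "f (pos i) \<le> r" "f (pos k) \<le> r" using cc_in[OF cc] by auto
  have g0v: "g 0 = f (pos i)" using g0 merge_fun_eq[OF pos_in_X[OF i]] by (simp add: g_def)
  have g1v: "g 1 = f (pos k)" using g1 merge_fun_eq[OF pos_in_X[OF k]] by (simp add: g_def)
  have gle: "\<forall>t\<in>{0..1}. g t \<le> v" using ts by (simp add: v_def)
  have uniq: "t = ts" if t: "t \<in> {0..1}" "g t = v" for t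
  proof -
    have fiv: "f (pos i) \<le> v" using fi vr by simp
    have A: "\<exists>x. \<gamma> s = \<pi> x \<and> x \<in> Xr v \<and> connected_component (Xr v) (pos i) x" if "s \<in> {0..1}" for s
    proof (rule U_lemma)
      show "connectedin T (\<gamma> ` {0..1})" using sub_conn[OF p] by simp
      show "\<gamma> ` {0..1} \<subseteq> \<pi> ` Xr v" using image_sub_Xr[OF p _, of 0 1 v] gle by (simp add: g_def)
      show "\<pi> (pos i) \<in> \<gamma> ` {0..1}" using g0 by force
      show "\<gamma> s \<in> \<gamma> ` {0..1}" using that by force
    qed (use i fiv in auto)
    obtain x where x: "\<gamma> t = \<pi> x" "x \<in> Xr v" "connected_component (Xr v) (pos i) x" using A[OF t(1)] by blast
    obtain y where y: "\<gamma> ts = \<pi> y" "y \<in> Xr v" "connected_component (Xr v) (pos i) y" using A[OF ts(1)] by blast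
    have xX: "x \<in> X" and yX: "y \<in> X" using x(2) y(2) by (auto simp: Xr_def)
    have fx: "f x = v" using t(2) merge_fun_eq[OF xX] x(1) by (simp add: g_def)
    have fy: "f y = v" using merge_fun_eq[OF yX] y(1) by (simp add: g_def v_def)
    have "connected_component (Xr v) x y" using x(3) y(3) connected_component_sym connected_component_trans by blast
    hence "merge_rel X f x y" using xX yX fx fy by (simp add: mr_iff)
    hence "\<gamma> t = \<gamma> ts" using class_eq[OF xX yX] x(1) y(1) by simp
    thus ?thesis using inj t(1) ts(1) by (auto dest: inj_onD)
  qed
  have ts0: "0 < ts"
  proof (rule ccontr)
    assume "\<not> 0 < ts" hence "ts = 0" using ts(1) by auto
    thus False using g0v fi vr by (simp add: v_def)
  qed
  have ts1: "ts < 1"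
  proof (rule ccontr)
    assume "\<not> ts < 1" hence "ts = 1" using ts(1) by auto
    thus False using g1v fi vr by (simp add: v_def)
  qed
  define h where "h = Max (insert r {f (pos w) | w. w \<in> vertices K \<and> f (pos w) < v})"
  have hfin: "finite (insert r {f (pos w) | w. w \<in> vertices K \<and> f (pos w) < v})"
    using fin_vert by auto
  have rh: "r \<le> h" unfolding h_def using hfin by (intro Max_ge) auto
  have hv: "h < v"
  proof -
    have "\<forall>a\<in>insert r {f (pos w) | w. w \<in> vertices K \<and> f (pos w) < v}. a < v" using vr by auto
    thus ?thesis unfolding h_def using hfin Max_in by blast
  qed
  have wh: "f (pos w) \<le> h" if "w \<in> vertices K" "f (pos w) < v" for w
    unfolding h_def using hfin that by (intro Max_ge) auto
  obtain \<delta> where \<delta>: "\<delta> > 0" "\<forall>t\<in>{0..1}. dist t ts < \<delta> \<longrightarrow> dist (g t) (g ts) < v - h"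
    using gc ts(1) hv unfolding continuous_on_iff by (metis diff_gt_0_iff_gt)
  define d where "d = min (\<delta>/2) (min (ts/2) ((1 - ts)/2))"
  have d: "0 < d" "d < \<delta>" "d < ts" "d < 1 - ts" using \<delta>(1) ts0 ts1 unfolding d_def min_def by auto
  define sm where "sm = ts - d"
  define sp where "sp = ts + d"
  have sm: "sm \<in> {0..1}" "sm < ts" and sp: "sp \<in> {0..1}" "ts < sp" using d ts(1) by (auto simp: sm_def sp_def)
  have gsm: "h < g sm" "g sm < v"
  proof -
    have "dist (g sm) (g ts) < v - h" using \<delta>(2) sm(1) d by (auto simp: sm_def dist_real_def)
    thus "h < g sm" by (auto simp: v_def dist_real_def)
    have "g sm \<le> v" using gle sm(1) by blast
    moreover have "g sm \<noteq> v" using uniq[OF sm(1)] sm(2) by auto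
    ultimately show "g sm < v" by simp
  qed
  have gsp: "h < g sp" "g sp < v"
  proof -
    have "dist (g sp) (g ts) < v - h" using \<delta>(2) sp(1) d by (auto simp: sp_def dist_real_def)
    thus "h < g sp" by (auto simp: v_def dist_real_def)
    have "g sp \<le> v" using gle sp(1) by blast
    moreover have "g sp \<noteq> v" using uniq[OF sp(1)] sp(2) by auto
    ultimately show "g sp < v" by simp
  qed
  define u where "u = max (g sm) (g sp)"
  have hu: "h < u" "u < v" using gsm gsp by (auto simp: u_def)
  obtain s1 where s1: "sm \<le> s1" "s1 \<le> ts" "g s1 = u"
    using IVT'[of g sm u ts] gsm gsp hu sm ts(1) continuous_on_subset[OF gc]
    by (fastforce simp: u_def v_def)
  obtain s2 where s2: "ts \<le> s2" "s2 \<le> sp" "g s2 = u"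
    using IVT2'[of g sp u ts] gsm gsp hu sp ts(1) continuous_on_subset[OF gc]
    by (fastforce simp: u_def v_def)
  have "s1 \<noteq> ts" using s1(3) hu by (auto simp: v_def)
  hence s1ts: "s1 < ts" using s1(2) by simp
  have "s2 \<noteq> ts" using s2(3) hu by (auto simp: v_def)
  hence s2ts: "ts < s2" using s2(1) by simp
  have s1I: "s1 \<in> {0..1}" and s2I: "s2 \<in> {0..1}" using s1 s2 sm sp ts(1) by auto
  have "{0..s1} \<subseteq> {0..1}" using s1I by auto
  hence "continuous_on {0..s1} g" by (rule continuous_on_subset[OF gc])
  moreover have "{0..s1} \<noteq> {}" using s1I by auto
  ultimately have "\<exists>x\<in>{0..s1}. \<forall>y\<in>{0..s1}. g y \<le> g x" using continuous_attains_sup[OF compact_Icc] by blast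
  then obtain t1 where t1: "t1 \<in> {0..s1}" "\<forall>t\<in>{0..s1}. g t \<le> g t1" by blast
  have t1v: "g t1 < v"
  proof -
    have "t1 \<in> {0..1}" using t1(1) s1I by auto
    moreover have "t1 \<noteq> ts" using t1(1) s1ts by auto
    ultimately have "g t1 \<noteq> v" using uniq by blast
    moreover have "g t1 \<le> v" using gle \<open>t1 \<in> {0..1}\<close> by blast
    ultimately show ?thesis by simp
  qed
  have x1: "\<exists>x. \<gamma> s1 = \<pi> x \<and> f x = u \<and> connected_component (Xr u) (pos i) x"
  proof (rule side_lemma[OF p, of 0 s1 0 i _ "g t1"])
    show "{0..s1} \<subseteq> {0..1}" using s1I by auto
    show "(0::real) \<in> {0..s1}" using s1I by auto
    show "\<gamma> 0 = \<pi> (pos i)" by (rule g0)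
    show "i \<in> vertices K" by (rule i)
    show "s1 \<in> {0..s1}" using s1I by auto
    show "\<forall>t\<in>{0..s1}. merge_fun f (\<gamma> t) \<le> g t1" using t1(2) by (simp add: g_def)
    show "f (pos i) \<le> u" using fi rh hu by simp
    have "s1 \<in> {0..s1}" using s1I by auto
    hence "g s1 \<le> g t1" using t1(2) by blast
    thus "u \<le> g t1" using s1(3) by simp
    show "\<forall>w'\<in>vertices K. f (pos w') \<le> g t1 \<longrightarrow> f (pos w') \<le> u"
    proof (intro ballI impI)
      fix w' assume w': "w' \<in> vertices K" "f (pos w') \<le> g t1"
      hence "f (pos w') < v" using t1v by simp
      hence "f (pos w') \<le> h" using wh w'(1) by blast
      thus "f (pos w') \<le> u" using hu by simp
    qed
    show "merge_fun f (\<gamma> s1) = u" using s1(3) by (simp add: g_def)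
  qed
  have "{s2..1} \<subseteq> {0..1}" using s2I by auto
  hence "continuous_on {s2..1} g" by (rule continuous_on_subset[OF gc])
  moreover have "{s2..1} \<noteq> {}" using s2I by auto
  ultimately have "\<exists>x\<in>{s2..1}. \<forall>y\<in>{s2..1}. g y \<le> g x" using continuous_attains_sup[OF compact_Icc] by blast
  then obtain t2 where t2: "t2 \<in> {s2..1}" "\<forall>t\<in>{s2..1}. g t \<le> g t2" by blast
  have t2v: "g t2 < v"
  proof -
    have "t2 \<in> {0..1}" using t2(1) s2I by auto
    moreover have "t2 \<noteq> ts" using t2(1) s2ts by auto
    ultimately have "g t2 \<noteq> v" using uniq by blast
    moreover have "g t2 \<le> v" using gle \<open>t2 \<in> {0..1}\<close> by blast
    ultimately show ?thesis by simp
  qed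
  have x2: "\<exists>x. \<gamma> s2 = \<pi> x \<and> f x = u \<and> connected_component (Xr u) (pos k) x"
  proof (rule side_lemma[OF p, of s2 1 1 k _ "g t2"])
    show "{s2..1} \<subseteq> {0..1}" using s2I by auto
    show "(1::real) \<in> {s2..1}" using s2I by auto
    show "\<gamma> 1 = \<pi> (pos k)" by (rule g1)
    show "k \<in> vertices K" by (rule k)
    show "s2 \<in> {s2..1}" using s2I by auto
    show "\<forall>t\<in>{s2..1}. merge_fun f (\<gamma> t) \<le> g t2" using t2(2) by (simp add: g_def)
    show "f (pos k) \<le> u" using fi rh hu by simp
    have "s2 \<in> {s2..1}" using s2I by auto
    hence "g s2 \<le> g t2" using t2(2) by blast
    thus "u \<le> g t2" using s2(3) by simp
    show "\<forall>w'\<in>vertices K. f (pos w') \<le> g t2 \<longrightarrow> f (pos w') \<le> u"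
    proof (intro ballI impI)
      fix w' assume w': "w' \<in> vertices K" "f (pos w') \<le> g t2"
      hence "f (pos w') < v" using t2v by simp
      hence "f (pos w') \<le> h" using wh w'(1) by blast
      thus "f (pos w') \<le> u" using hu by simp
    qed
    show "merge_fun f (\<gamma> s2) = u" using s2(3) by (simp add: g_def)
  qed
  obtain x1 where x1: "\<gamma> s1 = \<pi> x1" "f x1 = u" "connected_component (Xr u) (pos i) x1" using x1 by blast
  obtain x2 where x2: "\<gamma> s2 = \<pi> x2" "f x2 = u" "connected_component (Xr u) (pos k) x2" using x2 by blast
  have "connected_component (Xr u) (pos i) (pos k)" using cc_mono[OF _ cc] rh hu by simp
  hence c12: "connected_component (Xr u) x1 x2"
    using x1(3) x2(3) connected_component_sym connected_component_trans by metis
  have x1X: "x1 \<in> X" and x2X: "x2 \<in> X" using cc_in[OF c12] by auto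
  have "merge_rel X f x1 x2" using c12 x1X x2X x1(2) x2(2) by (simp add: mr_iff)
  hence "\<gamma> s1 = \<gamma> s2" using class_eq[OF x1X x2X] x1(1) x2(1) by simp
  hence "s1 = s2" using inj s1I s2I by (auto dest: inj_onD)
  thus False using s1ts s2ts by simp
qed

end


locale PLc = PL K pos f for K :: "'v set set" and pos :: "'v \<Rightarrow> 'a::euclidean_space" and f +
  assumes conn: "connected (realization K pos)"
begin

definition vals where "vals = (\<lambda>w. f (pos w)) ` vertices K"
definition rmax where "rmax = Max vals"

lemma vals_fin: "finite vals" by (simp add: vals_def fin_vert)

lemma le_rmax: "w \<in> vertices K \<Longrightarrow> f (pos w) \<le> rmax"
  unfolding rmax_def vals_def using vals_fin[unfolded vals_def] by (intro Max_ge) auto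

lemma X_le_rmax: "x \<in> X \<Longrightarrow> f x \<le> rmax"
proof -
  assume "x \<in> X"
  then obtain \<sigma> where s: "\<sigma> \<in> K" "x \<in> H \<sigma>" using X_cases by blast
  then obtain w where "w \<in> \<sigma>" "f x \<le> f (pos w)" using high_vertex by blast
  thus ?thesis using le_rmax[of w] inK_vert[OF s(1)] by force
qed

lemma Xr_rmax: "Xr rmax = X" using X_le_rmax by (auto simp: Xr_def)

lemma cc_rmax: "x \<in> X \<Longrightarrow> y \<in> X \<Longrightarrow> connected_component (Xr rmax) x y"
  using conn Xr_rmax connected_iff_connected_component by metis

definition e where "e j x = Min {r \<in> insert (f x) vals. f x \<le> r \<and> connected_component (Xr r) x (pos j)}"

lemma e_set_fin: "finite {r \<in> insert (f x) vals. f x \<le> r \<and> connected_component (Xr r) x (pos j)}"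
  using vals_fin by simp

lemma e_set_ne:
  assumes "x \<in> X" "j \<in> vertices K"
  shows "rmax \<in> {r \<in> insert (f x) vals. f x \<le> r \<and> connected_component (Xr r) x (pos j)}"
proof -
  have "rmax \<in> vals" unfolding rmax_def using vals_fin
    by (rule Max_in) (use assms(2) in \<open>auto simp: vals_def\<close>)
  thus ?thesis using X_le_rmax[OF assms(1)] cc_rmax[OF assms(1) pos_in_X[OF assms(2)]] by auto
qed

lemma e_const:
  assumes "x \<in> X" "y \<in> X" "\<pi> x = \<pi> y"
  shows "e j x = e j y"
proof -
  have m: "merge_rel X f x y" using class_eq assms by blast
  hence fxy: "f x = f y" and cxy: "connected_component (Xr (f x)) x y" by (auto simp: mr_iff)
  have "connected_component (Xr r) x (pos j) \<longleftrightarrow> connected_component (Xr r) y (pos j)" if "f x \<le> r" for r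
  proof -
    have "connected_component (Xr r) x y" using cc_mono[OF that cxy] .
    thus ?thesis using connected_component_sym connected_component_trans by metis
  qed
  hence "{r \<in> insert (f x) vals. f x \<le> r \<and> connected_component (Xr r) x (pos j)} =
         {r \<in> insert (f y) vals. f y \<le> r \<and> connected_component (Xr r) y (pos j)}"
    using fxy by auto
  thus ?thesis by (simp add: e_def)
qed

lemma e_at_low:
  assumes "\<sigma> \<in> K" "x \<in> H \<sigma>" "u \<in> \<sigma>" "f (pos u) \<le> f x"
  shows "e u x = f x"
proof -
  have "connected_component (Xr (f x)) x (pos u)" using seg_cc[OF assms(1,2) pos_in_H[OF assms(3)]] assms(4) by simp
  hence "f x \<in> {r \<in> insert (f x) vals. f x \<le> r \<and> connected_component (Xr r) x (pos u)}" by simp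
  moreover have "\<forall>r\<in>{r \<in> insert (f x) vals. f x \<le> r \<and> connected_component (Xr r) x (pos u)}. f x \<le> r" by simp
  ultimately show ?thesis unfolding e_def using e_set_fin
    by (metis (no_types, lifting) Min_eqI)
qed

lemma e_sep:
  assumes "x \<in> X" "y \<in> X" "f x = f y" "\<forall>j\<in>vertices K. e j x = e j y"
  shows "\<pi> x = \<pi> y"
proof -
  obtain \<sigma> where s: "\<sigma> \<in> K" "x \<in> H \<sigma>" using X_cases assms(1) by blast
  obtain u where u: "u \<in> \<sigma>" "f (pos u) \<le> f x" using low_vertex[OF s] by blast
  have ex: "e u x = f x" using e_at_low[OF s u] .
  hence ey: "e u y = f y" using assms(3,4) inK_vert[OF s(1) u(1)] by auto
  have "e u y \<in> {r \<in> insert (f y) vals. f y \<le> r \<and> connected_component (Xr r) y (pos u)}"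
    unfolding e_def using e_set_fin e_set_ne[OF assms(2) inK_vert[OF s(1) u(1)]]
    by (intro Min_in) auto
  hence cy: "connected_component (Xr (f y)) y (pos u)" using ey by simp
  have cx: "connected_component (Xr (f x)) x (pos u)" using seg_cc[OF s pos_in_H[OF u(1)]] u(2) by simp
  have "connected_component (Xr (f x)) x y" using cx cy assms(3) connected_component_sym connected_component_trans by metis
  hence "merge_rel X f x y" using assms by (simp add: mr_iff)
  thus ?thesis using class_eq assms(1,2) by blast
qed

lemma e_on_H:
  assumes s: "\<sigma> \<in> K" and j: "j \<in> vertices K"
  shows "\<exists>c. \<forall>x\<in>H \<sigma>. e j x = max (f x) c"
proof -
  define P where "P r = (\<exists>u\<in>\<sigma>. f (pos u) \<le> r \<and> connected_component (Xr r) (pos u) (pos j))" for r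
  have key: "connected_component (Xr r) x (pos j) \<longleftrightarrow> P r" if x: "x \<in> H \<sigma>" "f x \<le> r" for x r
  proof
    assume c: "connected_component (Xr r) x (pos j)"
    obtain u where u: "u \<in> \<sigma>" "f (pos u) \<le> f x" using low_vertex[OF s x(1)] by blast
    have "connected_component (Xr r) (pos u) x" using seg_cc[OF s pos_in_H[OF u(1)] x(1)] u(2) x(2) by simp
    hence "connected_component (Xr r) (pos u) (pos j)" using c connected_component_trans by blast
    moreover have "f (pos u) \<le> r" using u(2) x(2) by simp
    ultimately show "P r" using u(1) unfolding P_def by blast
  next
    assume "P r"
    then obtain u where u: "u \<in> \<sigma>" "f (pos u) \<le> r" "connected_component (Xr r) (pos u) (pos j)" by (auto simp: P_def)
    have "connected_component (Xr r) x (pos u)" using seg_cc[OF s x(1) pos_in_H[OF u(1)]] u(2) x(2) by simp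
    thus "connected_component (Xr r) x (pos j)" using u(3) connected_component_trans by blast
  qed
  define c where "c = Min {r \<in> vals. P r}"
  have Pfin: "finite {r \<in> vals. P r}" using vals_fin by simp
  obtain u0 where u0: "u0 \<in> \<sigma>" using Kne[OF s] by blast
  have Prmax: "P rmax" unfolding P_def
    using u0 le_rmax[OF inK_vert[OF s u0]] cc_rmax[OF pos_in_X[OF inK_vert[OF s u0]] pos_in_X[OF j]] by blast
  have rmax_vals: "rmax \<in> vals" unfolding rmax_def using vals_fin
    by (rule Max_in) (use j in \<open>auto simp: vals_def\<close>)
  have c_in: "c \<in> {r \<in> vals. P r}" unfolding c_def using Pfin Prmax rmax_vals by (intro Min_in) auto
  have c_min: "c \<le> r" if "r \<in> vals" "P r" for r unfolding c_def using Pfin that by (intro Min_le) auto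
  have Pmono: "P r2" if "P r1" "r1 \<le> r2" for r1 r2 using that cc_mono unfolding P_def by (meson order_trans)
  have Pdown: "\<exists>r'\<in>vals. r' \<le> r \<and> P r'" if Pr: "P r" for r
  proof -
    obtain u where u: "u \<in> \<sigma>" "f (pos u) \<le> r" "connected_component (Xr r) (pos u) (pos j)" using Pr by (auto simp: P_def)
    define A where "A = {w \<in> vals. w \<le> r}"
    have Afin: "finite A" using vals_fin by (simp add: A_def)
    have uA: "f (pos u) \<in> A" using u(1,2) inK_vert[OF s] by (auto simp: A_def vals_def)
    define r' where "r' = Max A"
    have r'A: "r' \<in> A" unfolding r'_def using Afin uA by (intro Max_in) auto
    have ge: "w \<le> r'" if "w \<in> A" for w unfolding r'_def using Afin that by (intro Max_ge)
    have fj: "f (pos j) \<le> r" using cc_in[OF u(3)] by simp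
    have fjA: "f (pos j) \<in> A" using fj j by (auto simp: A_def vals_def)
    have "connected_component (Xr r') (pos u) (pos j)"
    proof (rule stab)
      show "r' \<le> r" using r'A by (simp add: A_def)
      show "\<forall>w\<in>vertices K. f (pos w) \<le> r \<longrightarrow> f (pos w) \<le> r'" using ge by (auto simp: A_def vals_def)
      show "u \<in> vertices K" using inK_vert[OF s u(1)] .
      show "f (pos u) \<le> r'" using ge uA by blast
      show "pos j \<in> Xr r'" using pos_in_Xr[OF j] ge fjA by blast
      show "connected_component (Xr r) (pos u) (pos j)" using u(3) .
    qed
    hence "P r'" using u(1) ge uA unfolding P_def by blast
    thus ?thesis using r'A by (auto simp: A_def)
  qed
  have "e j x = max (f x) c" if x: "x \<in> H \<sigma>" for x
  proof -
    let ?M = "{r \<in> insert (f x) vals. f x \<le> r \<and> connected_component (Xr r) x (pos j)}"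
    have Mfin: "finite ?M" using e_set_fin .
    have Mchar: "r \<in> ?M \<longleftrightarrow> r \<in> insert (f x) vals \<and> f x \<le> r \<and> P r" for r
      using key[OF x] by auto
    show ?thesis
    proof (cases "c \<le> f x")
      case True
      hence "P (f x)" using Pmono c_in by blast
      hence "f x \<in> ?M" using Mchar by simp
      moreover have "\<forall>r\<in>?M. f x \<le> r" by simp
      ultimately have "Min ?M = f x" using Mfin by (metis (no_types, lifting) Min_eqI)
      thus ?thesis using True by (simp add: e_def)
    next
      case False
      have "c \<in> ?M" using Mchar c_in False by auto
      moreover have "\<forall>r\<in>?M. c \<le> r"
      proof
        fix r assume rM: "r \<in> ?M"
        hence Pr: "P r" and rin: "r \<in> insert (f x) vals" and fr: "f x \<le> r" using Mchar by auto
        show "c \<le> r"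
        proof (cases "r \<in> vals")
          case True thus ?thesis using c_min Pr by blast
        next
          case False
          hence "r = f x" using rin by simp
          then obtain r' where "r' \<in> vals" "r' \<le> f x" "P r'" using Pdown Pr by blast
          hence "c \<le> r'" using c_min by blast
          thus ?thesis using \<open>r' \<le> f x\<close> \<open>\<not> c \<le> f x\<close> by simp
        qed
      qed
      ultimately have "Min ?M = c" using Mfin by (metis (no_types, lifting) Min_eqI)
      thus ?thesis using False by (simp add: e_def)
    qed
  qed
  thus ?thesis by blast
qed

lemma e_cont: "j \<in> vertices K \<Longrightarrow> continuous_on X (e j)"
proof -
  assume j: "j \<in> vertices K"
  have "continuous_on (H \<sigma>) (e j)" if s: "\<sigma> \<in> K" for \<sigma>
  proof -
    obtain c where c: "\<forall>x\<in>H \<sigma>. e j x = max (f x) c" using e_on_H[OF s j] by blast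
    have "continuous_on (H \<sigma>) (\<lambda>x. max (f x) c)" by (intro continuous_intros f_cont_H[OF s])
    thus ?thesis using c continuous_on_cong by force
  qed
  thus ?thesis unfolding X_eq by (intro continuous_on_closed_Union) (auto simp: finK H_closed)
qed

end


definition delta :: "nat \<Rightarrow> (real \<Rightarrow>\<^sub>C real)" where
  "delta n = Bcontfun (\<lambda>x. max 0 (1 - \<bar>x - real n\<bar>))"

lemma delta_apply: "apply_bcontfun (delta n) (real m) = (if m = n then 1 else 0)"
proof -
  have "(\<lambda>x::real. max 0 (1 - \<bar>x - real n\<bar>)) \<in> bcontfun"
    by (rule bcontfun_normI[where b=1]) (auto intro!: continuous_intros)
  hence a: "apply_bcontfun (delta n) (real m) = max 0 (1 - \<bar>real m - real n\<bar>)"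
    unfolding delta_def by (simp add: Bcontfun_inverse)
  show ?thesis
  proof (cases "m = n")
    case False
    hence "1 \<le> \<bar>real m - real n\<bar>" by linarith
    thus ?thesis using a False by simp
  qed (use a in simp)
qed

lemma sum_apply: "finite A \<Longrightarrow> apply_bcontfun (sum F A) m = (\<Sum>a\<in>A. apply_bcontfun (F a) m)"
  by (induction A rule: finite_induct) auto

context PLc begin

definition N where "N = card (vertices K)"
definition en where "en = (SOME h. bij_betw h {0..<N} (vertices K))"

lemma en_bij: "bij_betw en {0..<N} (vertices K)"
  unfolding en_def N_def using ex_bij_betw_nat_finite[OF fin_vert] by (rule someI_ex)

definition phi :: "'a \<Rightarrow> (real \<Rightarrow>\<^sub>C real)" where
  "phi x = (\<Sum>n<N. e (en n) x *\<^sub>R delta n) + f x *\<^sub>R delta N"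

lemma phi_apply: "apply_bcontfun (phi x) (real m) = (\<Sum>n<N. e (en n) x * (if m = n then 1 else 0)) + f x * (if m = N then 1 else 0)"
  unfolding phi_def by (simp add: sum_apply delta_apply)

lemma phi_apply_lt: "m < N \<Longrightarrow> apply_bcontfun (phi x) (real m) = e (en m) x"
  unfolding phi_apply by (simp add: if_distrib sum.delta' cong: if_cong)

lemma phi_apply_N: "apply_bcontfun (phi x) (real N) = f x"
  unfolding phi_apply by simp

lemma phi_const: "x \<in> X \<Longrightarrow> y \<in> X \<Longrightarrow> \<pi> x = \<pi> y \<Longrightarrow> phi x = phi y"
proof -
  assume a: "x \<in> X" "y \<in> X" "\<pi> x = \<pi> y"
  hence "f x = f y" using class_eq by (auto simp: mr_iff)
  moreover have "e j x = e j y" for j using e_const[OF a] .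
  ultimately show ?thesis unfolding phi_def by simp
qed

lemma phi_inj: "x \<in> X \<Longrightarrow> y \<in> X \<Longrightarrow> phi x = phi y \<Longrightarrow> \<pi> x = \<pi> y"
proof -
  assume a: "x \<in> X" "y \<in> X" "phi x = phi y"
  have "f x = f y" using phi_apply_N[of x] phi_apply_N[of y] a(3) by simp
  moreover have "\<forall>j\<in>vertices K. e j x = e j y"
  proof
    fix j assume "j \<in> vertices K"
    hence "j \<in> en ` {0..<N}" using en_bij by (simp add: bij_betw_def)
    then obtain m where m: "m \<in> {0..<N}" "en m = j" by blast
    thus "e j x = e j y" using phi_apply_lt[of m x] phi_apply_lt[of m y] a(3) by auto
  qed
  ultimately show ?thesis using e_sep a(1,2) by blast
qed

lemma phi_cont: "continuous_on X phi"
proof -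
  have "en n \<in> vertices K" if "n < N" for n using en_bij that by (auto simp: bij_betw_def)
  hence "\<forall>n\<in>{..<N}. continuous_on X (\<lambda>x. e (en n) x *\<^sub>R delta n)"
    by (auto intro!: continuous_intros e_cont)
  hence "continuous_on X (\<lambda>x. \<Sum>n<N. e (en n) x *\<^sub>R delta n)"
    by (intro continuous_on_sum) auto
  moreover have "continuous_on X (\<lambda>x. f x *\<^sub>R delta N)" by (intro continuous_intros f_cont)
  ultimately show ?thesis unfolding phi_def[abs_def] by (intro continuous_on_add)
qed

lemma path_X:
  assumes i: "i \<in> vertices K" and k: "k \<in> vertices K"
  shows "path_component X (pos i) (pos k)"
proof -
  have "connected_component (Xr rmax) (pos i) (pos k)" using cc_rmax pos_in_X i k by blast
  hence r: "(i, k) \<in> (E rmax)\<^sup>*"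
    using CC[OF vert_K[OF i] vert_K[OF k] pos_in_H[of i "{i}"] pos_in_H[of k "{k}"]] le_rmax i k by auto
  show ?thesis using r
  proof (induction rule: rtrancl_induct)
    case base thus ?case using path_component_refl pos_in_X[OF i] by blast
  next
    case (step y z)
    then obtain \<sigma> where s: "\<sigma> \<in> K" "y \<in> \<sigma>" "z \<in> \<sigma>" by (auto simp: E_def)
    have "closed_segment (pos y) (pos z) \<subseteq> H \<sigma>" using closed_segment_subset[OF pos_in_H[OF s(2)] pos_in_H[OF s(3)] H_convex] .
    hence "path_component X (pos y) (pos z)" using H_sub_X[OF s(1)] path_component_linepath by blast
    thus ?case using step.IH path_component_trans by blast
  qed
qed

lemma arc_exists:
  assumes i: "i \<in> vertices K" and k: "k \<in> vertices K" and ne: "\<pi> (pos i) \<noteq> \<pi> (pos k)"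
  shows "\<exists>\<gamma>. pathin T \<gamma> \<and> inj_on \<gamma> {0..1} \<and> \<gamma> 0 = \<pi> (pos i) \<and> \<gamma> 1 = \<pi> (pos k)"
proof -
  obtain g where g: "path g" "path_image g \<subseteq> X" "pathstart g = pos i" "pathfinish g = pos k"
    using path_X[OF i k] unfolding path_component_def by blast
  have gX: "g t \<in> X" if "t \<in> {0..1}" for t using g(2) that by (auto simp: path_image_def)
  define \<Phi> where "\<Phi> c = phi (SOME x. x \<in> c)" for c
  have \<Phi>\<pi>: "\<Phi> (\<pi> x) = phi x" if "x \<in> X" for x
  proof -
    have "(SOME z. z \<in> \<pi> x) \<in> \<pi> x" using in_class[OF that] by (rule someI)
    thus ?thesis unfolding \<Phi>_def using class_mem phi_const that by metis
  qed
  have \<Phi>T: "continuous_map T euclidean \<Phi>"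
    unfolding \<Phi>_def[abs_def] by (rule cont_T[OF phi_cont phi_const])
  define Kc where "Kc = (\<pi> \<circ> g) ` {0..1}"
  have cg: "continuous_map (subtopology euclideanreal {0..1}) (top_of_set X) g"
  proof (rule continuous_map_into_subtopology)
    show "continuous_map (subtopology euclideanreal {0..1}) euclidean g"
      using g(1) by (simp add: path_def)
    show "g \<in> topspace (subtopology euclideanreal {0..1}) \<rightarrow> X" using gX by auto
  qed
  have pg: "pathin T (\<pi> \<circ> g)" unfolding pathin_def using continuous_map_compose[OF cg cont_pi] .
  have cKc: "compactin T Kc" unfolding Kc_def using compactin_path_image[OF pg] .
  have KcT: "Kc \<subseteq> topspace T" using compactin_subset_topspace[OF cKc] .
  have cs: "compact_space (subtopology T Kc)" using compact_space_subtopology[OF cKc] .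
  have tsK: "topspace (subtopology T Kc) = Kc" using KcT by auto
  have cm: "continuous_map (subtopology T Kc) euclidean \<Phi>" using continuous_map_from_subtopology[OF \<Phi>T] .
  have injK: "inj_on \<Phi> Kc"
  proof
    fix c c' assume c: "c \<in> Kc" "c' \<in> Kc" "\<Phi> c = \<Phi> c'"
    obtain t where t: "t \<in> {0..1}" "c = \<pi> (g t)" using c(1) by (auto simp: Kc_def)
    obtain t' where t': "t' \<in> {0..1}" "c' = \<pi> (g t')" using c(2) by (auto simp: Kc_def)
    have "phi (g t) = phi (g t')" using c(3) t t' \<Phi>\<pi> gX by simp
    thus "c = c'" using phi_inj gX t t' by simp
  qed
  have pphi: "path (phi \<circ> g)"
    unfolding path_def
  proof (rule continuous_on_compose)
    show "continuous_on {0..1} g" using g(1) by (simp add: path_def)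
    show "continuous_on (g ` {0..1}) phi" using continuous_on_subset[OF phi_cont] g(2) by (simp add: path_image_def)
  qed
  have phine: "phi (pos i) \<noteq> phi (pos k)" using phi_inj pos_in_X i k ne by blast
  have ps: "pathstart (phi \<circ> g) = phi (pos i)" using g(3) by (simp add: pathstart_def)
  have pf: "pathfinish (phi \<circ> g) = phi (pos k)" using g(4) by (simp add: pathfinish_def)
  obtain q where q: "arc q" "path_image q \<subseteq> path_image (phi \<circ> g)"
      "pathstart q = phi (pos i)" "pathfinish q = phi (pos k)"
    using path_contains_arc[OF pphi ps pf phine] by blast
  have imgeq: "path_image (phi \<circ> g) = \<Phi> ` Kc"
  proof -
    have "phi (g t) = \<Phi> (\<pi> (g t))" if "t \<in> {0..1}" for t using \<Phi>\<pi> gX that by simp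
    thus ?thesis unfolding path_image_def Kc_def by (auto simp: image_comp intro!: image_cong)
  qed
  define \<psi> where "\<psi> = inv_into Kc \<Phi>"
  have c\<psi>: "continuous_map (subtopology euclidean (path_image q)) (subtopology T Kc) \<psi>"
    unfolding \<psi>_def
  proof (rule continuous_inverse_map[OF cs Hausdorff_space_euclidean cm])
    show "\<And>x. x \<in> topspace (subtopology T Kc) \<Longrightarrow> inv_into Kc \<Phi> (\<Phi> x) = x"
      using injK tsK by (auto intro: inv_into_f_f)
    show "path_image q \<subseteq> \<Phi> ` topspace (subtopology T Kc)" using q(2) imgeq tsK by simp
  qed
  have cq: "continuous_map (subtopology euclideanreal {0..1}) (subtopology euclidean (path_image q)) q"
  proof (rule continuous_map_into_subtopology)
    show "continuous_map (subtopology euclideanreal {0..1}) euclidean q"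
      using q(1) by (simp add: arc_def path_def)
    show "q \<in> topspace (subtopology euclideanreal {0..1}) \<rightarrow> path_image q" by (auto simp: path_image_def)
  qed
  have "continuous_map (subtopology euclideanreal {0..1}) (subtopology T Kc) (\<psi> \<circ> q)"
    using continuous_map_compose[OF cq c\<psi>] .
  hence pth: "pathin T (\<psi> \<circ> q)" unfolding pathin_def using continuous_map_in_subtopology by blast
  have inj: "inj_on (\<psi> \<circ> q) {0..1}"
  proof (rule comp_inj_on)
    show "inj_on q {0..1}" using q(1) by (simp add: arc_def)
    show "inj_on \<psi> (q ` {0..1})" unfolding \<psi>_def
      using inj_on_inv_into q(2) imgeq by (metis path_image_def)
  qed
  have \<pi>iK: "\<pi> (pos i) \<in> Kc" using g(3) by (force simp: Kc_def pathstart_def)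
  have "(\<pi> \<circ> g) 1 \<in> Kc" unfolding Kc_def by (rule imageI) simp
  hence \<pi>kK: "\<pi> (pos k) \<in> Kc" using g(4) by (simp add: pathfinish_def)
  have e0: "(\<psi> \<circ> q) 0 = \<pi> (pos i)"
    using q(3) \<Phi>\<pi>[OF pos_in_X[OF i]] inv_into_f_f[OF injK \<pi>iK] by (simp add: \<psi>_def pathstart_def)
  have e1: "(\<psi> \<circ> q) 1 = \<pi> (pos k)"
    using q(4) \<Phi>\<pi>[OF pos_in_X[OF k]] inv_into_f_f[OF injK \<pi>kK] by (simp add: \<psi>_def pathfinish_def)
  show ?thesis using pth inj e0 e1 by blast
qed

end


context PLc begin

lemma lca_char:
  assumes i: "i \<in> vertices K" and k: "k \<in> vertices K"
  shows "lca_matrix K pos f i k \<le> r \<longleftrightarrow> connected_component (Xr r) (pos i) (pos k)"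
proof (cases "\<pi> (pos i) = \<pi> (pos k)")
  case True
  have iX: "pos i \<in> X" and kX: "pos k \<in> X" using pos_in_X i k by auto
  have m: "merge_rel X f (pos i) (pos k)" using class_eq[OF iX kX] True by simp
  have val: "lca_matrix K pos f i k = f (pos i)"
    unfolding lca_matrix_def Let_def using True merge_fun_eq[OF iX] by simp
  show ?thesis
  proof
    assume "lca_matrix K pos f i k \<le> r"
    hence "f (pos i) \<le> r" using val by simp
    thus "connected_component (Xr r) (pos i) (pos k)" using m cc_mono by (auto simp: mr_iff)
  next
    assume "connected_component (Xr r) (pos i) (pos k)"
    thus "lca_matrix K pos f i k \<le> r" using val cc_in by simp
  qed
next
  case False
  define P where "P m = (\<exists>\<gamma>. pathin T \<gamma> \<and> inj_on \<gamma> {0..1} \<and> \<gamma> 0 = \<pi> (pos i) \<and> \<gamma> 1 = \<pi> (pos k) \<and>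
                   m = Sup (merge_fun f ` \<gamma> ` {0..1}))" for m
  have val: "lca_matrix K pos f i k = (SOME m. P m)"
    unfolding lca_matrix_def Let_def P_def using False by simp
  obtain \<gamma>0 where "pathin T \<gamma>0 \<and> inj_on \<gamma>0 {0..1} \<and> \<gamma>0 0 = \<pi> (pos i) \<and> \<gamma>0 1 = \<pi> (pos k)"
    using arc_exists[OF i k False] by blast
  hence "P (Sup (merge_fun f ` \<gamma>0 ` {0..1}))" unfolding P_def by blast
  hence "P (SOME m. P m)" by (rule someI)
  then obtain \<gamma> where \<gamma>: "pathin T \<gamma>" "inj_on \<gamma> {0..1}" "\<gamma> 0 = \<pi> (pos i)" "\<gamma> 1 = \<pi> (pos k)"
      "lca_matrix K pos f i k = Sup (merge_fun f ` \<gamma> ` {0..1})"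
    unfolding P_def val by blast
  have img: "merge_fun f ` \<gamma> ` {0..1} = (\<lambda>t. merge_fun f (\<gamma> t)) ` {0..1}" by (simp add: image_image)
  have "compact ((\<lambda>t. merge_fun f (\<gamma> t)) ` {0..1})"
    using compact_continuous_image[OF g_cont[OF \<gamma>(1)]] by simp
  hence bdd: "bdd_above ((\<lambda>t. merge_fun f (\<gamma> t)) ` {0..1})"
    by (intro bounded_imp_bdd_above compact_imp_bounded)
  have "lca_matrix K pos f i k \<le> r \<longleftrightarrow> (\<forall>t\<in>{0..1}. merge_fun f (\<gamma> t) \<le> r)"
    unfolding \<gamma>(5) img using cSup_le_iff[OF _ bdd] by simp
  also have "\<dots> \<longleftrightarrow> connected_component (Xr r) (pos i) (pos k)"
    using arc_le[OF \<gamma>(1) i k \<gamma>(3,4)] arc_ge[OF \<gamma>(1,2) i k \<gamma>(3,4)] by blast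
  finally show ?thesis .
qed

end


lemma sum_single:
  assumes "finite V" "k \<in> V" "\<forall>l\<in>V. l \<noteq> k \<longrightarrow> F l = 0"
  shows "sum F V = F k"
proof -
  have "sum F V = F k + sum F (V - {k})" using sum.remove[OF assms(1,2)] .
  moreover have "sum F (V - {k}) = 0" using assms(3) by (intro sum.neutral) auto
  ultimately show ?thesis by simp
qed

theorem theorem2:
  fixes K :: "'v set set" and pos :: "'v \<Rightarrow> 'a::euclidean_space"
    and f g :: "'a \<Rightarrow> real" and p :: "'v \<Rightarrow> real" and q :: real
  assumes "geom_simplicial_complex K pos"
    and "connected (realization K pos)"
    and "1 \<le> q"
    and "piecewise_linear K pos f" and "piecewise_linear K pos g"
    and "prob_vector (vertices K) p" and "balanced (vertices K) p"
  shows "dGW q (vertices K) p (lca_matrix K pos f) (vertices K) p (lca_matrix K pos g)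
         \<le> 1/2 * real (card (vertices K)) powr (2/q)
              * Lq_norm q (vertices K) p (\<lambda>v. f (pos v) - g (pos v))"
proof -
  interpret F: PLc K pos f using assms(1,2,4) by unfold_locales
  interpret G: PLc K pos g using assms(1,2,5) by unfold_locales
  define V where "V = vertices K"
  have finV: "finite V" using F.fin_vert by (simp add: V_def)
  have p0: "\<forall>v\<in>V. 0 \<le> p v" and p1: "sum p V = 1" using assms(6) by (auto simp: prob_vector_def V_def)
  have Vne: "V \<noteq> {}" using p1 by auto
  have q0: "0 < q" using assms(3) by simp
  define D where "D v = \<bar>f (pos v) - g (pos v)\<bar>" for v
  define \<epsilon> where "\<epsilon> = Max (D ` V)"
  have \<epsilon>in: "\<epsilon> \<in> D ` V" unfolding \<epsilon>_def using finV Vne by (intro Max_in) auto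
  then obtain w where w: "w \<in> V" "D w = \<epsilon>" by auto
  have Dle: "D v \<le> \<epsilon>" if "v \<in> V" for v unfolding \<epsilon>_def using finV that by (intro Max_ge) auto
  have \<epsilon>0: "0 \<le> \<epsilon>" using w by (simp add: D_def)
  have Xb: "\<bar>f x - g x\<bar> \<le> \<epsilon>" if x: "x \<in> realization K pos" for x
  proof -
    obtain \<sigma> where s: "\<sigma> \<in> K" "x \<in> F.H \<sigma>" using F.X_cases x by blast
    obtain l where l: "\<forall>v\<in>\<sigma>. 0 \<le> l v" "sum l \<sigma> = 1" "x = (\<Sum>v\<in>\<sigma>. l v *\<^sub>R pos v)"
      using F.hull_param[OF F.Kfin[OF s(1)] F.Kinj[OF s(1)] s(2)] by blast
    have "f x - g x = (\<Sum>v\<in>\<sigma>. l v * f (pos v)) - (\<Sum>v\<in>\<sigma>. l v * g (pos v))"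
      using F.f_comb[OF s(1) l(1,2)] G.f_comb[OF s(1) l(1,2)] l(3) by simp
    also have "\<dots> = (\<Sum>v\<in>\<sigma>. l v * (f (pos v) - g (pos v)))"
      by (simp add: sum_subtractf right_diff_distrib)
    finally have "\<bar>f x - g x\<bar> \<le> (\<Sum>v\<in>\<sigma>. \<bar>l v * (f (pos v) - g (pos v))\<bar>)"
      using sum_abs by (metis)
    also have "\<dots> = (\<Sum>v\<in>\<sigma>. l v * D v)" using l(1) by (intro sum.cong) (auto simp: D_def abs_mult)
    also have "\<dots> \<le> (\<Sum>v\<in>\<sigma>. l v * \<epsilon>)"
      using l(1) Dle F.inK_vert[OF s(1)] by (intro sum_mono mult_left_mono) (auto simp: V_def)
    also have "\<dots> = \<epsilon>" using l(2) by (simp add: sum_distrib_right[symmetric])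
    finally show ?thesis .
  qed
  have Wb1: "lca_matrix K pos g i k \<le> lca_matrix K pos f i k + \<epsilon>" if i: "i \<in> V" and k: "k \<in> V" for i k
  proof -
    let ?a = "lca_matrix K pos f i k"
    have "connected_component (F.Xr ?a) (pos i) (pos k)"
      using F.lca_char[of i k ?a] i k by (simp add: V_def)
    moreover have "F.Xr ?a \<subseteq> G.Xr (?a + \<epsilon>)"
      using Xb by (fastforce simp: F.Xr_def G.Xr_def)
    ultimately have "connected_component (G.Xr (?a + \<epsilon>)) (pos i) (pos k)"
      using connected_component_of_subset by blast
    thus ?thesis using G.lca_char[of i k "?a + \<epsilon>"] i k by (simp add: V_def)
  qed
  have Wb2: "lca_matrix K pos f i k \<le> lca_matrix K pos g i k + \<epsilon>" if i: "i \<in> V" and k: "k \<in> V" for i k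
  proof -
    let ?a = "lca_matrix K pos g i k"
    have "connected_component (G.Xr ?a) (pos i) (pos k)"
      using G.lca_char[of i k ?a] i k by (simp add: V_def)
    moreover have "G.Xr ?a \<subseteq> F.Xr (?a + \<epsilon>)"
      using Xb by (fastforce simp: F.Xr_def G.Xr_def)
    ultimately have "connected_component (F.Xr (?a + \<epsilon>)) (pos i) (pos k)"
      using connected_component_of_subset by blast
    thus ?thesis using F.lca_char[of i k "?a + \<epsilon>"] i k by (simp add: V_def)
  qed
  have Wb: "\<bar>lca_matrix K pos f i k - lca_matrix K pos g i k\<bar> \<le> \<epsilon>" if "i \<in> V" "k \<in> V" for i k
    using Wb1[OF that] Wb2[OF that] by linarith
  define C where "C i j = (if i = j then p i else 0)" for i j
  have Ccoup: "C \<in> couplings V p V p"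
  proof -
    have "(\<Sum>j\<in>V. C i j) = p i" if "i \<in> V" for i
      using sum_single[OF finV that, of "C i"] by (simp add: C_def)
    moreover have "(\<Sum>i\<in>V. C i j) = p j" if "j \<in> V" for j
      using sum_single[OF finV that, of "\<lambda>i. C i j"] by (simp add: C_def)
    ultimately show ?thesis using p0 by (auto simp: couplings_def C_def)
  qed
  let ?W1 = "lca_matrix K pos f" and ?W2 = "lca_matrix K pos g"
  define val where "val C' = (\<Sum>i\<in>V. \<Sum>k\<in>V. \<Sum>j\<in>V. \<Sum>l\<in>V. \<bar>?W1 i k - ?W2 j l\<bar> powr q * C' i j * C' k l) powr (1/q)" for C'
  have inner: "(\<Sum>j\<in>V. \<Sum>l\<in>V. \<bar>?W1 i k - ?W2 j l\<bar> powr q * C i j * C k l)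
       = \<bar>?W1 i k - ?W2 i k\<bar> powr q * p i * p k" if i: "i \<in> V" and k: "k \<in> V" for i k
  proof -
    have "(\<Sum>l\<in>V. \<bar>?W1 i k - ?W2 j l\<bar> powr q * C i j * C k l) = \<bar>?W1 i k - ?W2 j k\<bar> powr q * C i j * p k" for j
      using sum_single[OF finV k, of "\<lambda>l. \<bar>?W1 i k - ?W2 j l\<bar> powr q * C i j * C k l"] by (simp add: C_def)
    hence "(\<Sum>j\<in>V. \<Sum>l\<in>V. \<bar>?W1 i k - ?W2 j l\<bar> powr q * C i j * C k l)
        = (\<Sum>j\<in>V. \<bar>?W1 i k - ?W2 j k\<bar> powr q * C i j * p k)" by simp
    also have "\<dots> = \<bar>?W1 i k - ?W2 i k\<bar> powr q * C i i * p k"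
      using sum_single[OF finV i, of "\<lambda>j. \<bar>?W1 i k - ?W2 j k\<bar> powr q * C i j * p k"] by (simp add: C_def)
    finally show ?thesis by (simp add: C_def)
  qed
  have S_le: "(\<Sum>i\<in>V. \<Sum>k\<in>V. \<Sum>j\<in>V. \<Sum>l\<in>V. \<bar>?W1 i k - ?W2 j l\<bar> powr q * C i j * C k l) \<le> \<epsilon> powr q"
  proof -
    have "(\<Sum>i\<in>V. \<Sum>k\<in>V. \<Sum>j\<in>V. \<Sum>l\<in>V. \<bar>?W1 i k - ?W2 j l\<bar> powr q * C i j * C k l)
        = (\<Sum>i\<in>V. \<Sum>k\<in>V. \<bar>?W1 i k - ?W2 i k\<bar> powr q * p i * p k)"
      using inner by (auto intro!: sum.cong)
    also have "\<dots> \<le> (\<Sum>i\<in>V. \<Sum>k\<in>V. \<epsilon> powr q * p i * p k)"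
    proof (intro sum_mono)
      fix i k assume ik: "i \<in> V" "k \<in> V"
      have "\<bar>?W1 i k - ?W2 i k\<bar> powr q \<le> \<epsilon> powr q" using Wb[OF ik] q0 by (intro powr_mono2) auto
      thus "\<bar>?W1 i k - ?W2 i k\<bar> powr q * p i * p k \<le> \<epsilon> powr q * p i * p k"
        using p0 ik by (intro mult_right_mono) auto
    qed
    also have "\<dots> = \<epsilon> powr q"
    proof -
      have "(\<Sum>k\<in>V. \<epsilon> powr q * p i * p k) = \<epsilon> powr q * p i" for i
        using p1 by (simp add: sum_distrib_left[symmetric])
      hence "(\<Sum>i\<in>V. \<Sum>k\<in>V. \<epsilon> powr q * p i * p k) = (\<Sum>i\<in>V. \<epsilon> powr q * p i)" by simp
      also have "\<dots> = \<epsilon> powr q" using p1 by (simp add: sum_distrib_left[symmetric])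
      finally show ?thesis .
    qed
    finally show ?thesis .
  qed
  have S_ge: "0 \<le> (\<Sum>i\<in>V. \<Sum>k\<in>V. \<Sum>j\<in>V. \<Sum>l\<in>V. \<bar>?W1 i k - ?W2 j l\<bar> powr q * C i j * C k l)"
    using p0 by (intro sum_nonneg) (auto simp: C_def)
  have valC: "val C \<le> \<epsilon>"
  proof -
    have "val C \<le> (\<epsilon> powr q) powr (1/q)"
      unfolding val_def using S_le S_ge q0 by (intro powr_mono2) auto
    also have "\<dots> = \<epsilon>" using q0 \<epsilon>0 by (simp add: powr_powr)
    finally show ?thesis .
  qed
  have dGW_le: "dGW q V p ?W1 V p ?W2 \<le> \<epsilon> / 2"
  proof -
    have "Inf (val ` couplings V p V p) \<le> val C"
      using Ccoup by (intro cInf_lower bdd_belowI[of _ 0]) (auto simp: val_def)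
    hence "dGW q V p ?W1 V p ?W2 \<le> 1/2 * val C" unfolding dGW_def val_def[abs_def] by simp
    thus ?thesis using valC by simp
  qed
  define N where "N = real (card V)"
  obtain m where m: "m \<in> V" "\<forall>v\<in>V. p v \<le> p m"
  proof -
    have "Max (p ` V) \<in> p ` V" using finV Vne by (intro Max_in) auto
    then obtain m where "m \<in> V" "p m = Max (p ` V)" by auto
    moreover have "\<forall>v\<in>V. p v \<le> Max (p ` V)" using finV by auto
    ultimately show ?thesis using that by metis
  qed
  have Npm: "1 \<le> N * p m"
    using sum_bounded_above[of V p "p m"] m p1 by (simp add: N_def)
  have bal: "p m * p m \<le> p w" using assms(7) m(1) w(1) by (simp add: balanced_def V_def)
  have N0: "0 \<le> N" by (simp add: N_def)
  have pw0: "0 \<le> p w" using p0 w(1) by blast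
  have NP: "1 \<le> N powr 2 * p w"
  proof -
    have "1 \<le> (N * p m) * (N * p m)" using Npm by (metis mult_mono' le_numeral_extra(1) order_trans zero_le_one mult_1)
    also have "\<dots> = N ^ 2 * (p m * p m)" by (simp add: power2_eq_square algebra_simps)
    also have "\<dots> \<le> N ^ 2 * p w" using bal by (intro mult_left_mono) auto
    finally show ?thesis using N0 by simp
  qed
  have Lq_ge: "\<epsilon> * p w powr (1/q) \<le> Lq_norm q V p (\<lambda>v. f (pos v) - g (pos v))"
  proof -
    have "D w powr q * p w \<le> (\<Sum>v\<in>V. D v powr q * p v)"
      by (rule member_le_sum) (use w p0 finV in auto)
    hence "\<epsilon> powr q * p w \<le> (\<Sum>v\<in>V. \<bar>f (pos v) - g (pos v)\<bar> powr q * p v)"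
      using w(2) by (simp add: D_def)
    hence "(\<epsilon> powr q * p w) powr (1/q) \<le> Lq_norm q V p (\<lambda>v. f (pos v) - g (pos v))"
      unfolding Lq_norm_def using q0 pw0 by (intro powr_mono2) auto
    moreover have "(\<epsilon> powr q * p w) powr (1/q) = \<epsilon> * p w powr (1/q)"
      using q0 \<epsilon>0 by (simp add: powr_mult powr_powr)
    ultimately show ?thesis by simp
  qed
  have "\<epsilon> \<le> N powr (2/q) * Lq_norm q V p (\<lambda>v. f (pos v) - g (pos v))"
  proof -
    have "1 \<le> (N powr 2 * p w) powr (1/q)" using NP q0 by (intro ge_one_powr_ge_zero) auto
    also have "\<dots> = N powr (2/q) * p w powr (1/q)" by (simp add: powr_mult powr_powr)
    finally have "\<epsilon> \<le> \<epsilon> * (N powr (2/q) * p w powr (1/q))" using \<epsilon>0 by (metis mult_left_mono mult_1_right)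
    also have "\<dots> = N powr (2/q) * (\<epsilon> * p w powr (1/q))" by simp
    also have "\<dots> \<le> N powr (2/q) * Lq_norm q V p (\<lambda>v. f (pos v) - g (pos v))"
      using Lq_ge by (intro mult_left_mono) auto
    finally show ?thesis .
  qed
  thus ?thesis using dGW_le by (simp add: V_def N_def)
qed


end
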